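(* Assume (A1)–(A4) and $(RC_+)$. Then the Markovian strategy $\pi_t^+:=\mathbf{1}_{R^+}(X_{t-1})$, $t\ge1$, generates an asymptotic exponential arbitrage with geometrically decaying probability of failure: there are constants $b>0$ and $c>0$ such that $\mathbb{P}(V_t^{\pi^+}\ge e^{bt})\ge 1-e^{-ct}$ for all sufficiently large $t$.
   Context: Setting: $\mu,\sigma:\mathbb{R}\to\mathbb{R}$ are measurable, $(\varepsilon_t)_{t\ge1}$ are i.i.d. real random variables on $(\Omega,\mathcal{F},\mathbb{P})$, $X_0\in\mathbb{R}$ is a constant, and $X_t=X_{t-1}+\mu(X_{t-1})+\sigma(X_{t-1})\varepsilon_t$ for $t\ge1$. The (discounted) stock price is $S_t=e^{X_t}$ and $\mathcal{F}_t=\sigma(X_s,0\le s\le t)$. Assumptions: (A1) $\varepsilon_1$ has a density $\gamma$ w.r.t. Lebesgue measure $\lambda$ which is bounded and bounded away from $0$ on each compact subset of $\mathbb{R}$; (A2) $\mu$ is locally bounded, $\sigma$ is positive, bounded away from $0$ on each compact set and globally bounded; (A3) $\limsup_{|x|\to\infty}|x+\mu(x)|/|x|<1$; (A4) there is $\kappa>0$ with $\mathbb{E}e^{\kappa\varepsilon_1^2}<\infty$, and $\mathbb{E}\varepsilon_1=0$. Condition $(RC_+)$: the set $R^+:=\{x\in\mathbb{R}:\mu(x)>0\}$ has $\lambda(R^+)>0$. A trading strategy is an $(\mathcal{F}_t)$-predictable $[0,1]$-valued process $(\pi_t)_{t\ge1}$ ($\pi_t$ is $\mathcal{F}_{t-1}$-measurable);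 its wealth process is $V_0^\pi=V_0>0$ and $V_t^\pi=V_{t-1}^\pi\big((1-\pi_t)+\pi_t S_t/S_{t-1}\big)$, $t\ge1$. *)

theory Defs
  imports "HOL-Probability.Probability"
begin

fun Xproc :: "(real \<Rightarrow> real) \<Rightarrow> (real \<Rightarrow> real) \<Rightarrow> (nat \<Rightarrow> 'a \<Rightarrow> real) \<Rightarrow> real \<Rightarrow> nat \<Rightarrow> 'a \<Rightarrow> real" where
  "Xproc \<mu> \<sigma> \<epsilon> x0 0 \<omega> = x0"
| "Xproc \<mu> \<sigma> \<epsilon> x0 (Suc t) \<omega> =
     Xproc \<mu> \<sigma> \<epsilon> x0 t \<omega> + \<mu> (Xproc \<mu> \<sigma> \<epsilon> x0 t \<omega>)
     + \<sigma> (Xproc \<mu> \<sigma> \<epsilon> x0 t \<omega>) * \<epsilon> (Suc t) \<omega>"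

definition Sproc :: "(real \<Rightarrow> real) \<Rightarrow> (real \<Rightarrow> real) \<Rightarrow> (nat \<Rightarrow> 'a \<Rightarrow> real) \<Rightarrow> real \<Rightarrow> nat \<Rightarrow> 'a \<Rightarrow> real" where
  "Sproc \<mu> \<sigma> \<epsilon> x0 t \<omega> = exp (Xproc \<mu> \<sigma> \<epsilon> x0 t \<omega>)"

text \<open>Wealth process of a strategy pi (pi t is the position on period t, t >= 1):
  V_0 = v0, V_t = V_{t-1} ((1 - pi_t) + pi_t S_t / S_{t-1}).\<close>
fun wealth :: "(real \<Rightarrow> real) \<Rightarrow> (real \<Rightarrow> real) \<Rightarrow> (nat \<Rightarrow> 'a \<Rightarrow> real) \<Rightarrow> real
     \<Rightarrow> (nat \<Rightarrow> 'a \<Rightarrow> real) \<Rightarrow> real \<Rightarrow> nat \<Rightarrow> 'a \<Rightarrow> real" where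
  "wealth \<mu> \<sigma> \<epsilon> x0 \<pi> v0 0 \<omega> = v0"
| "wealth \<mu> \<sigma> \<epsilon> x0 \<pi> v0 (Suc t) \<omega> =
     wealth \<mu> \<sigma> \<epsilon> x0 \<pi> v0 t \<omega> *
       ((1 - \<pi> (Suc t) \<omega>) + \<pi> (Suc t) \<omega> * Sproc \<mu> \<sigma> \<epsilon> x0 (Suc t) \<omega> / Sproc \<mu> \<sigma> \<epsilon> x0 t \<omega>)"

definition pi_plus :: "(real \<Rightarrow> real) \<Rightarrow> (real \<Rightarrow> real) \<Rightarrow> (nat \<Rightarrow> 'a \<Rightarrow> real) \<Rightarrow> real \<Rightarrow> nat \<Rightarrow> 'a \<Rightarrow> real" where
  "pi_plus \<mu> \<sigma> \<epsilon> x0 t \<omega> = indicator {x. \<mu> x > 0} (Xproc \<mu> \<sigma> \<epsilon> x0 (t - 1) \<omega>)"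

end

theory Submission
  imports Defs
begin


lemma exp_taylor2_bound: "exp (z::real) \<le> 1 + z + z\<^sup>2 * exp \<bar>z\<bar>"
proof -
  obtain t where t: "\<bar>t\<bar> \<le> \<bar>z\<bar>" "exp z = (\<Sum>m<2. (z ^ m) / fact m) + (exp t / fact 2) * z ^ 2"
    using Maclaurin_exp_le[of z 2] by blast
  have "exp t \<le> exp \<bar>z\<bar>" using t(1) by simp
  hence "exp t * z ^ 2 \<le> exp \<bar>z\<bar> * z ^ 2" by (intro mult_right_mono) auto
  moreover have "0 \<le> exp \<bar>z\<bar> * z ^ 2" by simp
  moreover have "(exp t / fact 2) * z ^ 2 = (exp t * z^2)/2" by (simp add: fact_numeral)
  moreover have "z\<^sup>2 * exp \<bar>z\<bar> = exp \<bar>z\<bar> * z ^ 2" by (simp add: mult.commute)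
  ultimately have "(exp t / fact 2) * z ^ 2 \<le> z\<^sup>2 * exp \<bar>z\<bar>"
    by linarith
  moreover have "(\<Sum>m<2. (z ^ m) / fact m) = 1 + z" by (simp add: numeral_2_eq_2)
  ultimately show ?thesis using t(2) by simp
qed

lemma sq_exp_bound:
  fixes e k :: real assumes k: "k > 0"
  shows "e\<^sup>2 * exp (2 * \<bar>e\<bar>) \<le> (2/k) * exp (2/k) * exp (k * e\<^sup>2)"
proof -
  have 1: "e\<^sup>2 \<le> (2/k) * exp (k * e\<^sup>2 / 2)"
  proof -
    have "k * e\<^sup>2 / 2 \<le> exp (k * e\<^sup>2 / 2)"
      using exp_ge_add_one_self[of "k * e\<^sup>2 / 2"] by linarith
    hence "(2/k) * (k * e\<^sup>2 / 2) \<le> (2/k) * exp (k * e\<^sup>2 / 2)"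
      using k by (intro mult_left_mono) auto
    thus ?thesis using k by simp
  qed
  have 2: "2 * \<bar>e\<bar> \<le> k * e\<^sup>2 / 2 + 2/k"
  proof -
    have "0 \<le> (k * \<bar>e\<bar> - 2)\<^sup>2 / (2*k)" using k by simp
    also have "(k * \<bar>e\<bar> - 2)\<^sup>2 / (2*k) = k * e\<^sup>2 / 2 - 2 * \<bar>e\<bar> + 2/k"
      using k by (simp add: power2_eq_square field_simps)
    finally show ?thesis by simp
  qed
  have "e\<^sup>2 * exp (2 * \<bar>e\<bar>) \<le> (2/k) * exp (k * e\<^sup>2 / 2) * exp (k * e\<^sup>2 / 2 + 2/k)"
    using 1 2 k by (intro mult_mono) auto
  also have "\<dots> = (2/k) * exp (2/k) * exp (k * e\<^sup>2)"
    by (simp add: exp_add[symmetric] mult_exp_exp)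
  finally show ?thesis .
qed

locale step_setup =
  fixes D :: "real measure" and \<mu> \<sigma> :: "real \<Rightarrow> real"
  assumes D_prob: "prob_space D" and D_sets: "sets D = sets borel"
    and D_int: "integrable D (\<lambda>e. e)" and D_mean: "integral\<^sup>L D (\<lambda>e. e) = 0"
    and D_Q: "integrable D (\<lambda>e. e\<^sup>2 * exp (2 * \<bar>e\<bar>))"
begin

lemma Dm: "f \<in> borel_measurable borel \<Longrightarrow> f \<in> borel_measurable D"
  using measurable_cong_sets[OF D_sets refl] by blast

lemma Dfin: "finite_measure D" using D_prob prob_space_def by blast

definition "E1 = integral\<^sup>L D (\<lambda>e. \<bar>e\<bar>)"
definition "Q = integral\<^sup>L D (\<lambda>e. e\<^sup>2 * exp (2 * \<bar>e\<bar>))"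

lemma E1_nonneg: "E1 \<ge> 0" unfolding E1_def by simp
lemma Q_nonneg: "Q \<ge> 0" unfolding Q_def by simp

lemma int_const: "integrable D (\<lambda>e. c::real)"
  using Dfin finite_measure.integrable_const by blast

lemma int_abs: "integrable D (\<lambda>e. \<bar>e\<bar>)"
  using D_int by simp

lemma int_exp:
  assumes "\<bar>a\<bar> \<le> 1" "\<bar>b\<bar> \<le> 1"
  shows "integrable D (\<lambda>e. exp (a * e + b * \<bar>e\<bar>))"
proof (rule Bochner_Integration.integrable_bound)
  show "integrable D (\<lambda>e. e\<^sup>2 * exp (2 * \<bar>e\<bar>) + exp 2)"
    using D_Q int_const by (rule Bochner_Integration.integrable_add)
  show "(\<lambda>e. exp (a * e + b * \<bar>e\<bar>)) \<in> borel_measurable D" by (intro Dm) measurable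
  show "AE e in D. norm (exp (a * e + b * \<bar>e\<bar>)) \<le> norm (e\<^sup>2 * exp (2 * \<bar>e\<bar>) + exp 2)"
  proof (rule AE_I2)
    fix e :: real
    have "a * e + b * \<bar>e\<bar> \<le> 2 * \<bar>e\<bar>"
    proof -
      have "a * e \<le> \<bar>a\<bar> * \<bar>e\<bar>" by (metis abs_ge_self abs_mult)
      also have "\<dots> \<le> 1 * \<bar>e\<bar>" using assms(1) by (intro mult_right_mono) auto
      finally have "a * e \<le> \<bar>e\<bar>" by simp
      moreover have "b * \<bar>e\<bar> \<le> 1 * \<bar>e\<bar>" using assms(2) by (intro mult_right_mono) auto
      ultimately show ?thesis by simp
    qed
    hence 1: "exp (a * e + b * \<bar>e\<bar>) \<le> exp (2 * \<bar>e\<bar>)" by simp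
    have "exp (2 * \<bar>e\<bar>) \<le> e\<^sup>2 * exp (2 * \<bar>e\<bar>) + exp 2"
    proof (cases "\<bar>e\<bar> \<le> 1")
      case True then show ?thesis by (simp add: add_increasing)
    next
      case False
      hence "1 \<le> e\<^sup>2" by (metis abs_ge_self abs_le_square_iff abs_one linorder_not_le one_power2 order_less_imp_le)
      hence "1 * exp (2 * \<bar>e\<bar>) \<le> e\<^sup>2 * exp (2 * \<bar>e\<bar>)" by (intro mult_right_mono) auto
      then show ?thesis using exp_gt_zero[of 2] by linarith
    qed
    from order_trans[OF 1 this] show "norm (exp (a * e + b * \<bar>e\<bar>)) \<le> norm (e\<^sup>2 * exp (2 * \<bar>e\<bar>) + exp 2)"
      by (simp add: add_nonneg_nonneg)
  qed
qed

lemma exp_moment_bound: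
  assumes "\<bar>a\<bar> \<le> 1" "\<bar>b\<bar> \<le> 1"
  shows "integral\<^sup>L D (\<lambda>e. exp (a * e + b * \<bar>e\<bar>)) \<le> exp (b * E1 + (\<bar>a\<bar> + \<bar>b\<bar>)\<^sup>2 * Q)"
proof -
  let ?c = "(\<bar>a\<bar> + \<bar>b\<bar>)\<^sup>2"
  have pw: "exp (a * e + b * \<bar>e\<bar>) \<le> 1 + a * e + b * \<bar>e\<bar> + ?c * (e\<^sup>2 * exp (2 * \<bar>e\<bar>))" for e
  proof -
    let ?z = "a * e + b * \<bar>e\<bar>"
    have az: "\<bar>?z\<bar> \<le> (\<bar>a\<bar> + \<bar>b\<bar>) * \<bar>e\<bar>"
      using abs_triangle_ineq[of "a*e" "b*\<bar>e\<bar>"] by (simp add: abs_mult distrib_right)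
    have z2: "?z\<^sup>2 \<le> ?c * e\<^sup>2"
    proof -
      have "?z\<^sup>2 = \<bar>?z\<bar>\<^sup>2" by simp
      also have "\<dots> \<le> ((\<bar>a\<bar> + \<bar>b\<bar>) * \<bar>e\<bar>)\<^sup>2" using az by (intro power_mono) auto
      also have "\<dots> = ?c * e\<^sup>2" by (simp add: power_mult_distrib)
      finally show ?thesis .
    qed
    have "(\<bar>a\<bar> + \<bar>b\<bar>) * \<bar>e\<bar> \<le> 2 * \<bar>e\<bar>" using assms by (intro mult_right_mono) auto
    hence ez: "exp \<bar>?z\<bar> \<le> exp (2 * \<bar>e\<bar>)" using az by simp
    have "?z\<^sup>2 * exp \<bar>?z\<bar> \<le> (?c * e\<^sup>2) * exp (2 * \<bar>e\<bar>)"
      using z2 ez by (intro mult_mono) auto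
    thus ?thesis using exp_taylor2_bound[of ?z] by (simp add: algebra_simps)
  qed
  have i1: "integrable D (\<lambda>e. 1 + a * e + b * \<bar>e\<bar> + ?c * (e\<^sup>2 * exp (2 * \<bar>e\<bar>)))"
    using int_const D_int int_abs D_Q by (intro Bochner_Integration.integrable_add Bochner_Integration.integrable_mult_right) auto
  have "integral\<^sup>L D (\<lambda>e. exp (a * e + b * \<bar>e\<bar>)) \<le> integral\<^sup>L D (\<lambda>e. 1 + a * e + b * \<bar>e\<bar> + ?c * (e\<^sup>2 * exp (2 * \<bar>e\<bar>)))"
    using int_exp[OF assms] i1 pw by (intro integral_mono) auto
  also have "\<dots> = 1 + a * integral\<^sup>L D (\<lambda>e. e) + b * E1 + ?c * Q"
  proof -
    have p: "prob_space D" by (rule D_prob)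
    have "integral\<^sup>L D (\<lambda>e. 1 + a * e + b * \<bar>e\<bar> + ?c * (e\<^sup>2 * exp (2 * \<bar>e\<bar>)))
        = integral\<^sup>L D (\<lambda>e. 1 + a * e + b * \<bar>e\<bar>) + integral\<^sup>L D (\<lambda>e. ?c * (e\<^sup>2 * exp (2 * \<bar>e\<bar>)))"
      using int_const D_int int_abs D_Q
      by (intro Bochner_Integration.integral_add Bochner_Integration.integrable_add Bochner_Integration.integrable_mult_right) auto
    also have "integral\<^sup>L D (\<lambda>e. 1 + a * e + b * \<bar>e\<bar>) = integral\<^sup>L D (\<lambda>e. 1 + a * e) + integral\<^sup>L D (\<lambda>e. b * \<bar>e\<bar>)"
      using int_const D_int int_abs
      by (intro Bochner_Integration.integral_add Bochner_Integration.integrable_add Bochner_Integration.integrable_mult_right) auto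
    also have "integral\<^sup>L D (\<lambda>e. 1 + a * e) = integral\<^sup>L D (\<lambda>e. 1) + integral\<^sup>L D (\<lambda>e. a * e)"
      using int_const D_int
      by (intro Bochner_Integration.integral_add Bochner_Integration.integrable_mult_right) auto
    also have "integral\<^sup>L D (\<lambda>e. 1::real) = 1" using p prob_space.prob_space by (simp add: prob_space.prob_space)
    finally show ?thesis by (simp add: E1_def Q_def)
  qed
  also have "\<dots> = 1 + (b * E1 + ?c * Q)" using D_mean by simp
  also have "\<dots> \<le> exp (b * E1 + ?c * Q)" by (rule exp_ge_add_one_self)
  finally show ?thesis .
qed

lemma exp_moment_nn:
  assumes "\<bar>a\<bar> \<le> 1" "\<bar>b\<bar> \<le> 1"
  shows "(\<integral>\<^sup>+e. ennreal (exp (a * e + b * \<bar>e\<bar>)) \<partial>D) \<le> ennreal (exp (b * E1 + (\<bar>a\<bar> + \<bar>b\<bar>)\<^sup>2 * Q))"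
  using exp_moment_bound[OF assms] int_exp[OF assms]
  by (subst nn_integral_eq_integral) auto

end




locale step2 = step_setup D \<mu> \<sigma> for D \<mu> \<sigma> +
  assumes mu_meas: "\<mu> \<in> borel_measurable borel"
    and sigma_meas: "\<sigma> \<in> borel_measurable borel"
    and mu_bdd: "\<And>R. \<exists>M. \<forall>x. \<bar>x\<bar> \<le> R \<longrightarrow> \<bar>\<mu> x\<bar> \<le> M"
    and sig_pos: "\<And>x. \<sigma> x > 0"
    and sig_away: "\<And>R. \<exists>a>0. \<forall>x. \<bar>x\<bar> \<le> R \<longrightarrow> a \<le> \<sigma> x"
    and sig_bdd: "\<exists>C. \<forall>x. \<sigma> x \<le> C"
    and contr: "\<exists>r<1. \<exists>R0. \<forall>x. R0 \<le> \<bar>x\<bar> \<longrightarrow> \<bar>x + \<mu> x\<bar> \<le> r * \<bar>x\<bar>"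
    and dens_lower: "\<And>E0. \<exists>a>0. \<forall>f\<in>borel_measurable borel.
          ennreal a * (\<integral>\<^sup>+e. f e * indicator {-E0..E0} e \<partial>lborel) \<le> (\<integral>\<^sup>+e. f e \<partial>D)"
    and RC: "emeasure lborel {x. 0 < \<mu> x} > 0"
begin

lemmas [measurable] = mu_meas sigma_meas

definition Ii :: "real \<Rightarrow> real" where "Ii x = indicator {y. 0 < \<mu> y} x"

lemma Ii_01: "Ii x = 0 \<or> Ii x = 1" by (simp add: Ii_def indicator_def)
lemma Ii_nonneg: "0 \<le> Ii x" by (simp add: Ii_def)
lemma Ii_le1: "Ii x \<le> 1" by (simp add: Ii_def indicator_def)
lemma Ii_mu: "0 \<le> Ii x * \<mu> x" by (simp add: Ii_def indicator_def)

lemma UB: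
  assumes s: "0 \<le> s" and th: "0 \<le> \<theta>" and Sg: "\<forall>y. \<sigma> y \<le> Sg"
    and sS: "s * Sg \<le> 1" and tS: "\<theta> * Sg \<le> 1"
  shows "(\<integral>\<^sup>+e. ennreal (exp (-s * Ii x * (\<mu> x + \<sigma> x * e)) * exp (\<theta> * \<bar>x + \<mu> x + \<sigma> x * e\<bar>)) \<partial>D)
    \<le> ennreal (exp (-s * Ii x * \<mu> x) * exp (\<theta> * \<bar>x + \<mu> x\<bar>) * exp (\<theta> * Sg * E1 + ((s + \<theta>) * Sg)\<^sup>2 * Q))"
proof -
  define a where "a = -s * Ii x * \<sigma> x"
  define b where "b = \<theta> * \<sigma> x"
  define C where "C = exp (-s * Ii x * \<mu> x) * exp (\<theta> * \<bar>x + \<mu> x\<bar>)"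
  have C0: "0 \<le> C" by (simp add: C_def)
  have sp: "0 < \<sigma> x" by (rule sig_pos)
  have pw: "exp (-s * Ii x * (\<mu> x + \<sigma> x * e)) * exp (\<theta> * \<bar>x + \<mu> x + \<sigma> x * e\<bar>)
       \<le> C * exp (a * e + b * \<bar>e\<bar>)" for e
  proof -
    have "\<bar>x + \<mu> x + \<sigma> x * e\<bar> \<le> \<bar>x + \<mu> x\<bar> + \<sigma> x * \<bar>e\<bar>"
      using abs_triangle_ineq[of "x + \<mu> x" "\<sigma> x * e"] sp by (simp add: abs_mult)
    hence "\<theta> * \<bar>x + \<mu> x + \<sigma> x * e\<bar> \<le> \<theta> * (\<bar>x + \<mu> x\<bar> + \<sigma> x * \<bar>e\<bar>)"
      using th by (intro mult_left_mono) auto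
    hence "-s * Ii x * (\<mu> x + \<sigma> x * e) + \<theta> * \<bar>x + \<mu> x + \<sigma> x * e\<bar>
        \<le> (-s * Ii x * \<mu> x + \<theta> * \<bar>x + \<mu> x\<bar>) + (a * e + b * \<bar>e\<bar>)"
      by (simp add: a_def b_def algebra_simps)
    hence 1: "exp (-s * Ii x * (\<mu> x + \<sigma> x * e) + \<theta> * \<bar>x + \<mu> x + \<sigma> x * e\<bar>)
        \<le> exp ((-s * Ii x * \<mu> x + \<theta> * \<bar>x + \<mu> x\<bar>) + (a * e + b * \<bar>e\<bar>))" by (simp only: exp_le_cancel_iff)
    have 2: "exp (-s * Ii x * (\<mu> x + \<sigma> x * e)) * exp (\<theta> * \<bar>x + \<mu> x + \<sigma> x * e\<bar>)
        = exp (-s * Ii x * (\<mu> x + \<sigma> x * e) + \<theta> * \<bar>x + \<mu> x + \<sigma> x * e\<bar>)"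
      by (simp only: exp_add)
    have 3: "C * exp (a * e + b * \<bar>e\<bar>) = exp ((-s * Ii x * \<mu> x + \<theta> * \<bar>x + \<mu> x\<bar>) + (a * e + b * \<bar>e\<bar>))"
      by (simp only: C_def exp_add)
    show ?thesis using 1 2 3 by simp
  qed
  have ab: "\<bar>a\<bar> \<le> s * Sg" "\<bar>b\<bar> \<le> \<theta> * Sg"
  proof -
    have "\<bar>a\<bar> = s * Ii x * \<sigma> x" using s sp Ii_nonneg[of x] by (simp add: a_def abs_mult)
    also have "\<dots> \<le> s * 1 * Sg" using s sp Sg Ii_le1[of x] Ii_nonneg[of x]
      by (intro mult_mono) auto
    finally show "\<bar>a\<bar> \<le> s * Sg" by simp
    have "\<bar>b\<bar> = \<theta> * \<sigma> x" using th sp by (simp add: b_def abs_mult)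
    also have "\<dots> \<le> \<theta> * Sg" using th Sg by (intro mult_left_mono) auto
    finally show "\<bar>b\<bar> \<le> \<theta> * Sg" .
  qed
  have a1: "\<bar>a\<bar> \<le> 1" "\<bar>b\<bar> \<le> 1" using ab sS tS by auto
  have "(\<integral>\<^sup>+e. ennreal (exp (-s * Ii x * (\<mu> x + \<sigma> x * e)) * exp (\<theta> * \<bar>x + \<mu> x + \<sigma> x * e\<bar>)) \<partial>D)
      \<le> (\<integral>\<^sup>+e. ennreal C * ennreal (exp (a * e + b * \<bar>e\<bar>)) \<partial>D)"
    using pw C0 by (intro nn_integral_mono) (simp add: ennreal_mult[symmetric])
  also have "\<dots> = ennreal C * (\<integral>\<^sup>+e. ennreal (exp (a * e + b * \<bar>e\<bar>)) \<partial>D)"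
    by (intro nn_integral_cmult Dm) measurable
  also have "\<dots> \<le> ennreal C * ennreal (exp (b * E1 + (\<bar>a\<bar> + \<bar>b\<bar>)\<^sup>2 * Q))"
    by (intro mult_left_mono exp_moment_nn a1) auto
  also have "\<dots> \<le> ennreal C * ennreal (exp (\<theta> * Sg * E1 + ((s + \<theta>) * Sg)\<^sup>2 * Q))"
  proof -
    have "b * E1 \<le> \<theta> * Sg * E1" using ab E1_nonneg by (intro mult_right_mono) auto
    moreover have "(\<bar>a\<bar> + \<bar>b\<bar>)\<^sup>2 \<le> ((s + \<theta>) * Sg)\<^sup>2"
      using ab by (intro power_mono) (auto simp: algebra_simps)
    hence "(\<bar>a\<bar> + \<bar>b\<bar>)\<^sup>2 * Q \<le> ((s + \<theta>) * Sg)\<^sup>2 * Q" using Q_nonneg by (intro mult_right_mono)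
    ultimately show ?thesis by (intro mult_left_mono) auto
  qed
  also have "\<dots> = ennreal (exp (-s * Ii x * \<mu> x) * exp (\<theta> * \<bar>x + \<mu> x\<bar>) * exp (\<theta> * Sg * E1 + ((s + \<theta>) * Sg)\<^sup>2 * Q))"
    using C0 by (simp add: ennreal_mult[symmetric] C_def)
  finally show ?thesis .
qed

lemma affine_indicator:
  assumes G: "G \<in> sets borel" and sp: "c > 0"
  shows "(\<integral>\<^sup>+e. indicator G (m + c * e) \<partial>lborel) = emeasure lborel G / ennreal c"
proof -
  have "emeasure lborel G = (\<integral>\<^sup>+e. indicator G e \<partial>lborel)" using G by simp
  also have "\<dots> = ennreal \<bar>c\<bar> * (\<integral>\<^sup>+e. indicator G (m + c * e) \<partial>lborel)"
    using G sp by (intro nn_integral_real_affine) auto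
  finally have "emeasure lborel G = ennreal c * (\<integral>\<^sup>+e. indicator G (m + c * e) \<partial>lborel)"
    (is "_ = _ * ?X") using sp by simp
  hence "emeasure lborel G / ennreal c = ennreal c * ?X / ennreal c" by simp
  also have "\<dots> = ?X * ennreal c / ennreal c" by (simp add: mult.commute)
  also have "\<dots> = ?X" using sp by (intro ennreal_mult_divide_eq) auto
  finally show ?thesis by simp
qed

lemma enn_sub:
  assumes "A + B \<le> ennreal T" "ennreal c \<le> B" "0 \<le> c" "0 \<le> T"
  shows "A \<le> ennreal (T - c)"
proof -
  have "A + ennreal c \<le> ennreal T" using assms(1,2) by (meson add_left_mono order_trans)
  moreover have "A \<le> A + ennreal c" by (rule add_increasing2) auto
  ultimately have "A \<le> ennreal T" by (rule order_trans[rotated])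
  hence "A < top" using ennreal_less_top order_le_less_trans by blast
  hence "A \<noteq> top" by simp
  then obtain a' where a': "0 \<le> a'" "A = ennreal a'" by (cases A) auto
  have "ennreal (a' + c) \<le> ennreal T" using \<open>A + ennreal c \<le> ennreal T\<close> a' assms(3) by simp
  hence "a' + c \<le> T" using assms(4) by simp
  thus ?thesis using a' by simp
qed

end



context step2 begin

lemma exists_G: "\<exists>n::nat. emeasure lborel ({x. 1 / real (Suc n) \<le> \<mu> x} \<inter> {- real n..real n}) \<noteq> 0"
proof (rule ccontr)
  assume "\<not> ?thesis"
  hence z: "\<And>n::nat. emeasure lborel ({x. 1 / real (Suc n) \<le> \<mu> x} \<inter> {- real n..real n}) = 0" by simp
  have sets: "range (\<lambda>n::nat. {x. 1 / real (Suc n) \<le> \<mu> x} \<inter> {- real n..real n}) \<subseteq> sets lborel"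
    by auto
  have u0: "emeasure lborel (\<Union>n::nat. {x. 1 / real (Suc n) \<le> \<mu> x} \<inter> {- real n..real n}) = 0"
    by (rule emeasure_UN_eq_0[OF z sets])
  have sub: "{x. 0 < \<mu> x} \<subseteq> (\<Union>n::nat. {x. 1 / real (Suc n) \<le> \<mu> x} \<inter> {- real n..real n})"
  proof
    fix x assume "x \<in> {x. 0 < \<mu> x}"
    hence mx: "0 < \<mu> x" by simp
    define n where "n = nat \<lceil>max \<bar>x\<bar> (1 / \<mu> x)\<rceil>"
    have n1: "\<bar>x\<bar> \<le> real n" unfolding n_def by linarith
    have n2: "1 / \<mu> x \<le> real n" unfolding n_def by linarith
    hence "1 \<le> real n * \<mu> x" using mx by (simp add: divide_le_eq)
    hence "1 \<le> real (Suc n) * \<mu> x" using mx by (simp add: algebra_simps)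
    hence "1 / real (Suc n) \<le> \<mu> x" by (simp add: divide_le_eq mult.commute)
    with n1 show "x \<in> (\<Union>n::nat. {x. 1 / real (Suc n) \<le> \<mu> x} \<inter> {- real n..real n})" by auto
  qed
  have "emeasure lborel {x. 0 < \<mu> x} \<le> emeasure lborel (\<Union>n::nat. {x. 1 / real (Suc n) \<le> \<mu> x} \<inter> {- real n..real n})"
    by (rule emeasure_mono[OF sub]) (use sets in auto)
  with u0 RC show False by simp
qed

lemma drift:
  "\<exists>s>0. \<exists>z>0. \<exists>h. h \<in> borel_measurable borel \<and> (\<exists>hm>0. \<forall>x. hm \<le> h x) \<and>
     (\<forall>x. (\<integral>\<^sup>+e. ennreal (exp (-s * Ii x * (\<mu> x + \<sigma> x * e)) * h (x + \<mu> x + \<sigma> x * e)) \<partial>D)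
            \<le> ennreal (exp (-z) * h x))"
proof -
  obtain C0 where C0: "\<forall>x. \<sigma> x \<le> C0" using sig_bdd by blast
  define Sg where "Sg = max C0 1"
  have Sg: "\<forall>x. \<sigma> x \<le> Sg" "1 \<le> Sg" using C0 by (auto simp: Sg_def intro: order_trans)
  obtain r R0 where r: "r < 1" "\<forall>x. R0 \<le> \<bar>x\<bar> \<longrightarrow> \<bar>x + \<mu> x\<bar> \<le> r * \<bar>x\<bar>" using contr by blast
  define r' where "r' = max r 0"
  have r': "0 \<le> r'" "r' < 1" "\<forall>x. R0 \<le> \<bar>x\<bar> \<longrightarrow> \<bar>x + \<mu> x\<bar> \<le> r' * \<bar>x\<bar>"
  proof -
    show "0 \<le> r'" "r' < 1" using r by (auto simp: r'_def)
    show "\<forall>x. R0 \<le> \<bar>x\<bar> \<longrightarrow> \<bar>x + \<mu> x\<bar> \<le> r' * \<bar>x\<bar>"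
    proof safe
      fix x assume "R0 \<le> \<bar>x\<bar>"
      hence "\<bar>x + \<mu> x\<bar> \<le> r * \<bar>x\<bar>" using r by blast
      also have "\<dots> \<le> r' * \<bar>x\<bar>" by (intro mult_right_mono) (auto simp: r'_def)
      finally show "\<bar>x + \<mu> x\<bar> \<le> r' * \<bar>x\<bar>" .
    qed
  qed
  obtain n :: nat where nG: "emeasure lborel ({x. 1 / real (Suc n) \<le> \<mu> x} \<inter> {- real n..real n}) \<noteq> 0"
    using exists_G by blast
  define \<eta> where "\<eta> = 1 / real (Suc n)"
  define N where "N = real n"
  define G where "G = {x. \<eta> \<le> \<mu> x} \<inter> {-N..N}"
  have eta: "0 < \<eta>" by (simp add: \<eta>_def)
  have N0: "0 \<le> N" by (simp add: N_def)
  have G_sets[measurable]: "G \<in> sets borel" unfolding G_def by measurable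
  have GmuN: "\<And>x. x \<in> G \<Longrightarrow> \<eta> \<le> \<mu> x \<and> \<bar>x\<bar> \<le> N" by (auto simp: G_def)
  have Gne: "emeasure lborel G \<noteq> 0" using nG by (simp add: G_def \<eta>_def N_def)
  have Gfin: "emeasure lborel G \<noteq> top"
  proof -
    have "emeasure lborel G \<le> emeasure lborel {-N..N}"
      by (rule emeasure_mono) (auto simp: G_def)
    also have "\<dots> < top" using N0 by simp
    finally show ?thesis by simp
  qed
  define mG where "mG = measure lborel G"
  have mG_eq: "emeasure lborel G = ennreal mG" using Gfin by (simp add: mG_def emeasure_eq_ennreal_measure)
  have mG0: "0 < mG" using Gne mG_eq by (simp add: mG_def zero_less_measure_iff)
  define R where "R = max R0 (max (N + 1) ((Sg * E1 + 1) / (1 - r')))"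
  have RR0: "R0 \<le> R" and RN: "N + 1 \<le> R" and R0': "0 \<le> R" using N0 by (auto simp: R_def)
  have Rr: "Sg * E1 + 1 \<le> (1 - r') * R"
  proof -
    have "(Sg * E1 + 1) / (1 - r') \<le> R" by (simp add: R_def)
    thus ?thesis using r' by (simp add: pos_divide_le_eq mult.commute)
  qed
  obtain Mm where Mm: "\<forall>x. \<bar>x\<bar> \<le> R \<longrightarrow> \<bar>\<mu> x\<bar> \<le> Mm" using mu_bdd by blast
  have Mm0: "0 \<le> Mm" using Mm[rule_format, of 0] R0' by auto
  obtain sc where sc: "0 < sc" "\<forall>x. \<bar>x\<bar> \<le> R \<longrightarrow> sc \<le> \<sigma> x" using sig_away by blast
  define E0 where "E0 = (N + R + Mm) / sc"
  obtain a where a: "0 < a" "\<forall>f\<in>borel_measurable borel.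
          ennreal a * (\<integral>\<^sup>+e. f e * indicator {-E0..E0} e \<partial>lborel) \<le> (\<integral>\<^sup>+e. f e \<partial>D)"
    using dens_lower by blast
  define cw where "cw = exp (-(Mm + Sg * E0))"
  have cw0: "0 < cw" by (simp add: cw_def)
  define \<delta> where "\<delta> = cw * a * mG / Sg"
  have d0: "0 < \<delta>" using cw0 a mG0 Sg by (simp add: \<delta>_def)
  define \<delta>' where "\<delta>' = min \<delta> 1"
  have d': "0 < \<delta>'" "\<delta>' \<le> \<delta>" "\<delta>' \<le> 1" using d0 by (auto simp: \<delta>'_def)
  define K where "K = Mm + Sg * E1 + 1"
  have K1: "1 \<le> K" using Mm0 Sg E1_nonneg by (simp add: K_def)
  define \<tau> where "\<tau> = min (1 / K) (\<eta> * \<delta>' / (24 * K))"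
  have tau0: "0 < \<tau>" using K1 eta d' by (simp add: \<tau>_def)
  have tauK: "\<tau> * K \<le> 1" using K1 by (simp add: \<tau>_def min_def field_simps)
  have tauK2: "24 * (\<tau> * K) \<le> \<eta> * \<delta>'"
  proof -
    have "\<tau> \<le> \<eta> * \<delta>' / (24 * K)" by (simp add: \<tau>_def)
    thus ?thesis using K1 by (simp add: le_divide_eq mult.commute mult.left_commute)
  qed
  have tau1: "\<tau> \<le> 1"
  proof -
    have "\<tau> * 1 \<le> \<tau> * K" using tau0 K1 by (intro mult_left_mono) auto
    thus ?thesis using tauK by simp
  qed
  define s where "s = min (1 / Sg) (min (\<tau> / (8 * Sg\<^sup>2 * Q + 1)) (min (1 / (R + 1)) (1 / (\<eta> + 1))))"
  have "0 \<le> 8 * Sg\<^sup>2 * Q" using Q_nonneg by simp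
  hence pos8: "0 < 8 * Sg\<^sup>2 * Q + 1" by linarith
  hence "0 < \<tau> / (8 * Sg\<^sup>2 * Q + 1)" using tau0 by simp
  hence s0: "0 < s" using Sg tau0 Q_nonneg R0' eta by (simp add: s_def)
  have sSg: "s * Sg \<le> 1"
  proof -
    have "s \<le> 1 / Sg" by (simp add: s_def)
    thus ?thesis using Sg by (simp add: le_divide_eq)
  qed
  have s1: "s \<le> 1"
  proof -
    have "s * 1 \<le> s * Sg" using s0 Sg by (intro mult_left_mono) auto
    thus ?thesis using sSg by simp
  qed
  have sQ: "8 * s * Sg\<^sup>2 * Q \<le> \<tau>"
  proof -
    have "s \<le> \<tau> / (8 * Sg\<^sup>2 * Q + 1)" by (simp add: s_def)
    hence "s * (8 * Sg\<^sup>2 * Q + 1) \<le> \<tau>" using pos8 by (simp add: le_divide_eq)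
    moreover have "0 \<le> s" using s0 by simp
    ultimately show ?thesis by (simp add: algebra_simps)
  qed
  have sR: "s * R \<le> 1"
  proof -
    have "s \<le> 1 / (R + 1)" by (simp add: s_def)
    hence "s * (R + 1) \<le> 1" using R0' by (simp add: le_divide_eq)
    thus ?thesis using s0 by (simp add: algebra_simps)
  qed
  have seta: "s * \<eta> \<le> 1"
  proof -
    have "s \<le> 1 / (\<eta> + 1)" by (simp add: s_def)
    hence "s * (\<eta> + 1) \<le> 1" using eta by (simp add: le_divide_eq)
    thus ?thesis using s0 by (simp add: algebra_simps)
  qed
  define \<theta> where "\<theta> = \<tau> * s"
  have th0: "0 < \<theta>" using tau0 s0 by (simp add: \<theta>_def)
  have ths: "\<theta> \<le> s" using tau1 s0 by (simp add: \<theta>_def mult_left_le_one_le)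
  have thSg: "\<theta> * Sg \<le> 1" using ths sSg Sg by (meson mult_right_mono order_trans zero_le_one)
  have thR: "\<theta> * R \<le> 1" using ths sR R0' by (meson mult_right_mono order_trans)
  have thK: "\<theta> * K \<le> s * (\<eta> * \<delta>' / 24)"
  proof -
    have "\<theta> * K = s * (\<tau> * K)" by (simp add: \<theta>_def algebra_simps)
    also have "\<dots> \<le> s * (\<eta> * \<delta>' / 24)" using tauK2 s0 by (intro mult_left_mono) auto
    finally show ?thesis .
  qed
  have thK1: "\<theta> * K \<le> s"
  proof -
    have "\<theta> * K = s * (\<tau> * K)" by (simp add: \<theta>_def algebra_simps)
    also have "\<dots> \<le> s * 1" using tauK s0 by (intro mult_left_mono) auto
    finally show ?thesis by simp
  qed
  define U where "U = \<theta> * Sg * E1 + ((s + \<theta>) * Sg)\<^sup>2 * Q"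
  have U: "U + \<theta> / 2 \<le> \<theta> * Sg * E1 + \<theta>"
  proof -
    have "((s + \<theta>) * Sg)\<^sup>2 \<le> (2 * s * Sg)\<^sup>2"
      using ths th0 Sg by (intro power_mono mult_right_mono) auto
    hence "((s + \<theta>) * Sg)\<^sup>2 * Q \<le> (2 * s * Sg)\<^sup>2 * Q" using Q_nonneg by (rule mult_right_mono)
    also have "\<dots> = s * (4 * s * Sg\<^sup>2 * Q)" by (simp add: power2_eq_square algebra_simps)
    also have "\<dots> \<le> s * (\<tau> / 2)" using sQ s0 by (intro mult_left_mono) auto
    also have "\<dots> = \<theta> / 2" by (simp add: \<theta>_def)
    finally show ?thesis by (simp add: U_def)
  qed
  define \<beta> where "\<beta> = exp (-(s * \<eta> / 2))"
  have b0: "0 < \<beta>" "\<beta> \<le> 1" using s0 eta by (auto simp: \<beta>_def)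
  have b1: "s * \<eta> / 4 \<le> 1 - \<beta>"
  proof -
    define v where "v = s * \<eta> / 2"
    have v: "0 \<le> v" "v \<le> 1" using s0 eta seta by (auto simp: v_def)
    have "1 + v \<le> exp v" by simp
    hence "\<beta> * (1 + v) \<le> \<beta> * exp v" using b0 by (intro mult_left_mono) auto
    also have "\<beta> * exp v = 1" by (simp add: \<beta>_def v_def exp_minus field_simps)
    finally have "\<beta> * (1 + v) \<le> 1" .
    moreover have "(1 - v / 2) * (1 + v) \<ge> 1" using v by (simp add: algebra_simps power2_eq_square)
      (metis mult_left_le_one_le mult_nonneg_nonneg v(1) v(2) divide_nonneg_pos zero_less_numeral
        mult.commute)
    ultimately have "\<beta> * (1 + v) \<le> (1 - v / 2) * (1 + v)" by linarith
    hence "\<beta> \<le> 1 - v / 2" using v by (simp add: mult_le_cancel_right)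
    thus ?thesis by (simp add: v_def)
  qed
  define h where "h x = (1 - (1 - \<beta>) * indicator G x) * exp (\<theta> * \<bar>x\<bar>)" for x
  have h_meas[measurable]: "h \<in> borel_measurable borel" unfolding h_def by measurable
  have h_le: "h y \<le> exp (\<theta> * \<bar>y\<bar>)" for y using b0 by (auto simp: h_def indicator_def)
  have h_ge: "\<beta> \<le> h y" for y
  proof -
    have "\<beta> * 1 \<le> \<beta> * exp (\<theta> * \<bar>y\<bar>)" using b0 th0 by (intro mult_left_mono) auto
    also have "\<dots> \<le> h y" using b0 by (auto simp: h_def indicator_def)
    finally show ?thesis by simp
  qed
  have h_nG: "h y = exp (\<theta> * \<bar>y\<bar>)" if "y \<notin> G" for y using that by (simp add: h_def)
  have h_G: "h y = \<beta> * exp (\<theta> * \<bar>y\<bar>)" if "y \<in> G" for y using that by (simp add: h_def)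
  have h0: "0 \<le> h y" for y using h_ge[of y] b0 by simp
  have main: "(\<integral>\<^sup>+e. ennreal (exp (-s * Ii x * (\<mu> x + \<sigma> x * e)) * h (x + \<mu> x + \<sigma> x * e)) \<partial>D)
            \<le> ennreal (exp (-(\<theta>/2)) * h x)" for x
  proof -
    have sp: "0 < \<sigma> x" by (rule sig_pos)
    have sIi: "0 \<le> s * Ii x" "s * Ii x \<le> 1" using s0 s1 Ii_nonneg[of x] Ii_le1[of x]
      by (auto intro: mult_le_one)
    have eIi: "exp (-s * Ii x * \<mu> x) \<le> 1"
    proof -
      have "0 \<le> s * (Ii x * \<mu> x)" using s0 Ii_mu[of x] by simp
      thus ?thesis by (simp add: mult.assoc)
    qed
    have UBx: "(\<integral>\<^sup>+e. ennreal (exp (-s * Ii x * (\<mu> x + \<sigma> x * e)) * exp (\<theta> * \<bar>x + \<mu> x + \<sigma> x * e\<bar>)) \<partial>D)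
        \<le> ennreal (exp (-s * Ii x * \<mu> x) * exp (\<theta> * \<bar>x + \<mu> x\<bar>) * exp U)"
      using UB[of s \<theta> Sg x] s0 th0 Sg sSg thSg by (simp add: U_def)
    have mono1: "(\<integral>\<^sup>+e. ennreal (exp (-s * Ii x * (\<mu> x + \<sigma> x * e)) * h (x + \<mu> x + \<sigma> x * e)) \<partial>D)
        \<le> (\<integral>\<^sup>+e. ennreal (exp (-s * Ii x * (\<mu> x + \<sigma> x * e)) * exp (\<theta> * \<bar>x + \<mu> x + \<sigma> x * e\<bar>)) \<partial>D)"
      by (intro nn_integral_mono ennreal_leI mult_left_mono h_le) auto
    have expand: "exp (-s * Ii x * \<mu> x) * exp (\<theta> * \<bar>x + \<mu> x\<bar>) * exp U
        = exp (-s * Ii x * \<mu> x + \<theta> * \<bar>x + \<mu> x\<bar> + U)" by (simp only: exp_add)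
    consider (far) "R \<le> \<bar>x\<bar>" | (inG) "x \<in> G" | (mid) "\<bar>x\<bar> < R" "x \<notin> G" by fastforce
    then show ?thesis
    proof cases
      case far
      have xG: "x \<notin> G" using far GmuN RN by force
      have mx: "\<bar>x + \<mu> x\<bar> \<le> r' * \<bar>x\<bar>" using r' RR0 far by auto
      have 1: "\<theta> * \<bar>x + \<mu> x\<bar> \<le> \<theta> * (r' * \<bar>x\<bar>)" using mx th0 by (intro mult_left_mono) auto
      have "Sg * E1 + 1 \<le> (1 - r') * \<bar>x\<bar>"
        using Rr far r' by (meson diff_ge_0_iff_ge less_imp_le mult_left_mono order_trans)
      hence 2: "\<theta> * (Sg * E1 + 1) \<le> \<theta> * ((1 - r') * \<bar>x\<bar>)" using th0 by (intro mult_left_mono) auto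
      have 3: "\<theta> * (Sg * E1 + 1) = \<theta> * Sg * E1 + \<theta>" "\<theta> * ((1 - r') * \<bar>x\<bar>) = \<theta> * \<bar>x\<bar> - \<theta> * (r' * \<bar>x\<bar>)"
        by (simp_all add: algebra_simps)
      have 4: "-s * Ii x * \<mu> x \<le> 0" using eIi by simp
      have "-s * Ii x * \<mu> x + \<theta> * \<bar>x + \<mu> x\<bar> + U \<le> -(\<theta>/2) + \<theta> * \<bar>x\<bar>"
        using 1 2 3 4 U by linarith
      hence "exp (-s * Ii x * \<mu> x) * exp (\<theta> * \<bar>x + \<mu> x\<bar>) * exp U \<le> exp (-(\<theta>/2)) * h x"
        using xG by (simp add: expand h_nG exp_add[symmetric])
      thus ?thesis using mono1 UBx by (meson ennreal_leI order_trans)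
    next
      case inG
      have em: "\<eta> \<le> \<mu> x" "\<bar>x\<bar> \<le> N" using GmuN[OF inG] by auto
      have Ii1: "Ii x = 1" using em eta by (simp add: Ii_def)
      have mu_b: "\<bar>\<mu> x\<bar> \<le> Mm" using Mm em RN by auto
      have 1: "\<theta> * \<bar>x + \<mu> x\<bar> \<le> \<theta> * (\<bar>x\<bar> + Mm)"
        using th0 mu_b by (intro mult_left_mono) (auto intro: order_trans[OF abs_triangle_ineq])
      have 2: "s * \<eta> \<le> s * \<mu> x" using s0 em by (intro mult_left_mono) auto
      have 3: "\<theta> * K \<le> s * \<eta> / 24"
      proof -
        have "s * (\<eta> * \<delta>' / 24) \<le> s * (\<eta> * 1 / 24)" using s0 eta d' by (intro mult_left_mono) auto
        thus ?thesis using thK by simp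
      qed
      have 4: "\<theta> * K = \<theta> * Mm + \<theta> * Sg * E1 + \<theta>" by (simp add: K_def algebra_simps)
      have 5: "\<theta> * (\<bar>x\<bar> + Mm) = \<theta> * \<bar>x\<bar> + \<theta> * Mm" by (simp add: algebra_simps)
      have 6: "0 \<le> s * \<eta>" using s0 eta by simp
      have "-s * Ii x * \<mu> x + \<theta> * \<bar>x + \<mu> x\<bar> + U \<le> -(\<theta>/2) + (-(s * \<eta> / 2) + \<theta> * \<bar>x\<bar>)"
        using 1 2 3 4 5 6 U Ii1 by simp
      hence "exp (-s * Ii x * \<mu> x) * exp (\<theta> * \<bar>x + \<mu> x\<bar>) * exp U \<le> exp (-(\<theta>/2)) * h x"
        using inG by (simp add: expand h_G \<beta>_def exp_add[symmetric])
      thus ?thesis using mono1 UBx by (meson ennreal_leI order_trans)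
    next
      case mid
      define T where "T = exp (\<theta> * \<bar>x\<bar>) * exp (\<theta> * Mm + U)"
      have mu_b: "\<bar>\<mu> x\<bar> \<le> Mm" using Mm mid by auto
      have T0: "0 \<le> T" by (simp add: T_def)
      have UBT: "exp (-s * Ii x * \<mu> x) * exp (\<theta> * \<bar>x + \<mu> x\<bar>) * exp U \<le> T"
      proof -
        have 1: "\<theta> * \<bar>x + \<mu> x\<bar> \<le> \<theta> * (\<bar>x\<bar> + Mm)"
          using th0 mu_b by (intro mult_left_mono) (auto intro: order_trans[OF abs_triangle_ineq])
        have 4: "-s * Ii x * \<mu> x \<le> 0" using eIi by simp
        have "-s * Ii x * \<mu> x + \<theta> * \<bar>x + \<mu> x\<bar> + U \<le> \<theta> * \<bar>x\<bar> + (\<theta> * Mm + U)"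
          using 1 4 by (simp add: algebra_simps)
        thus ?thesis by (simp add: expand T_def exp_add[symmetric])
      qed
      define A where "A = (\<integral>\<^sup>+e. ennreal (exp (-s * Ii x * (\<mu> x + \<sigma> x * e)) * h (x + \<mu> x + \<sigma> x * e)) \<partial>D)"
      define B where "B = (\<integral>\<^sup>+e. ennreal (exp (-s * Ii x * (\<mu> x + \<sigma> x * e)) *
            ((1 - \<beta>) * indicator G (x + \<mu> x + \<sigma> x * e) * exp (\<theta> * \<bar>x + \<mu> x + \<sigma> x * e\<bar>))) \<partial>D)"
      have AB: "A + B = (\<integral>\<^sup>+e. ennreal (exp (-s * Ii x * (\<mu> x + \<sigma> x * e)) * exp (\<theta> * \<bar>x + \<mu> x + \<sigma> x * e\<bar>)) \<partial>D)"
        unfolding A_def B_def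
      proof (subst nn_integral_add[symmetric])
        show "(\<lambda>e. ennreal (exp (-s * Ii x * (\<mu> x + \<sigma> x * e)) * h (x + \<mu> x + \<sigma> x * e))) \<in> borel_measurable D"
          by (intro Dm) measurable
        show "(\<lambda>e. ennreal (exp (-s * Ii x * (\<mu> x + \<sigma> x * e)) *
            ((1 - \<beta>) * indicator G (x + \<mu> x + \<sigma> x * e) * exp (\<theta> * \<bar>x + \<mu> x + \<sigma> x * e\<bar>)))) \<in> borel_measurable D"
          by (intro Dm) measurable
        show "(\<integral>\<^sup>+e. ennreal (exp (-s * Ii x * (\<mu> x + \<sigma> x * e)) * h (x + \<mu> x + \<sigma> x * e)) +
            ennreal (exp (-s * Ii x * (\<mu> x + \<sigma> x * e)) *
            ((1 - \<beta>) * indicator G (x + \<mu> x + \<sigma> x * e) * exp (\<theta> * \<bar>x + \<mu> x + \<sigma> x * e\<bar>))) \<partial>D)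
          = (\<integral>\<^sup>+e. ennreal (exp (-s * Ii x * (\<mu> x + \<sigma> x * e)) * exp (\<theta> * \<bar>x + \<mu> x + \<sigma> x * e\<bar>)) \<partial>D)"
        proof (rule nn_integral_cong)
          fix e
          let ?w = "exp (-s * Ii x * (\<mu> x + \<sigma> x * e))"
          let ?y = "x + \<mu> x + \<sigma> x * e"
          have q0: "0 \<le> (1 - \<beta>) * indicator G ?y * exp (\<theta> * \<bar>?y\<bar>)" using b0 by simp
          have "ennreal (?w * h ?y) + ennreal (?w * ((1 - \<beta>) * indicator G ?y * exp (\<theta> * \<bar>?y\<bar>)))
              = ennreal (?w * h ?y + ?w * ((1 - \<beta>) * indicator G ?y * exp (\<theta> * \<bar>?y\<bar>)))"
            using h0 q0 by (intro ennreal_plus[symmetric]) auto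
          also have "?w * h ?y + ?w * ((1 - \<beta>) * indicator G ?y * exp (\<theta> * \<bar>?y\<bar>)) = ?w * exp (\<theta> * \<bar>?y\<bar>)"
            by (simp add: h_def algebra_simps)
          finally show "ennreal (?w * h ?y) + ennreal (?w * ((1 - \<beta>) * indicator G ?y * exp (\<theta> * \<bar>?y\<bar>)))
              = ennreal (?w * exp (\<theta> * \<bar>?y\<bar>))" .
        qed
      qed
      have Btot: "A + B \<le> ennreal T" unfolding AB using order_trans[OF UBx ennreal_leI[OF UBT]] .
      have ebound: "\<bar>e\<bar> \<le> E0" if "x + \<mu> x + \<sigma> x * e \<in> G" for e
      proof -
        have yN: "\<bar>x + \<mu> x + \<sigma> x * e\<bar> \<le> N" using GmuN[OF that] by auto
        have "\<bar>\<sigma> x * e\<bar> \<le> \<bar>x + \<mu> x + \<sigma> x * e\<bar> + \<bar>x\<bar> + \<bar>\<mu> x\<bar>" by linarith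
        also have "\<dots> \<le> N + R + Mm" using yN mid mu_b by linarith
        finally have "sc * \<bar>e\<bar> \<le> N + R + Mm"
          using sc mid sp by (metis abs_mult abs_of_pos less_imp_le mult_right_mono order_trans abs_ge_zero)
        thus ?thesis using sc by (simp add: E0_def pos_le_divide_eq mult.commute)
      qed
      have wbound: "cw \<le> exp (-s * Ii x * (\<mu> x + \<sigma> x * e))" if "\<bar>e\<bar> \<le> E0" for e
      proof -
        have "s * Ii x * (\<mu> x + \<sigma> x * e) \<le> s * Ii x * \<bar>\<mu> x + \<sigma> x * e\<bar>"
          using mult_left_mono[OF abs_ge_self sIi(1)] .
        also have "\<dots> \<le> 1 * \<bar>\<mu> x + \<sigma> x * e\<bar>" using sIi by (intro mult_right_mono) auto
        also have "\<dots> \<le> \<bar>\<mu> x\<bar> + \<sigma> x * \<bar>e\<bar>"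
          using abs_triangle_ineq[of "\<mu> x" "\<sigma> x * e"] sp by (simp add: abs_mult)
        also have "\<dots> \<le> Mm + Sg * E0"
          using mu_b Sg sp that by (intro add_mono mult_mono) auto
        finally show ?thesis by (simp add: cw_def)
      qed
      have LB: "ennreal ((1 - \<beta>) * \<delta>) \<le> B"
      proof -
        have ptw: "ennreal ((1 - \<beta>) * cw) * indicator G (x + \<mu> x + \<sigma> x * e)
            \<le> ennreal (exp (-s * Ii x * (\<mu> x + \<sigma> x * e)) *
              ((1 - \<beta>) * indicator G (x + \<mu> x + \<sigma> x * e) * exp (\<theta> * \<bar>x + \<mu> x + \<sigma> x * e\<bar>)))" for e
        proof (cases "x + \<mu> x + \<sigma> x * e \<in> G")
          case True
          have w: "cw \<le> exp (-s * Ii x * (\<mu> x + \<sigma> x * e))" using wbound ebound True by blast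
          have e1: "1 \<le> exp (\<theta> * \<bar>x + \<mu> x + \<sigma> x * e\<bar>)" using th0 by simp
          have "(1 - \<beta>) * cw \<le> exp (-s * Ii x * (\<mu> x + \<sigma> x * e)) * ((1 - \<beta>) * 1 * exp (\<theta> * \<bar>x + \<mu> x + \<sigma> x * e\<bar>))"
          proof -
            have "(1 - \<beta>) * cw * 1 \<le> (1 - \<beta>) * exp (-s * Ii x * (\<mu> x + \<sigma> x * e)) * exp (\<theta> * \<bar>x + \<mu> x + \<sigma> x * e\<bar>)"
              using w e1 b0 cw0 by (intro mult_mono) auto
            thus ?thesis by (simp add: algebra_simps)
          qed
          thus ?thesis using True by (simp add: ennreal_leI)
        qed simp
        have "ennreal ((1 - \<beta>) * \<delta>) \<le> ennreal ((1 - \<beta>) * cw) * (ennreal a * ennreal (mG / \<sigma> x))"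
        proof -
          have "\<delta> \<le> cw * a * (mG / \<sigma> x)"
          proof -
            have "mG / Sg \<le> mG / \<sigma> x" using mG0 sp Sg by (intro divide_left_mono) auto
            hence "cw * a * (mG / Sg) \<le> cw * a * (mG / \<sigma> x)" using cw0 a by (intro mult_left_mono) auto
            thus ?thesis by (simp add: \<delta>_def)
          qed
          hence "(1 - \<beta>) * \<delta> \<le> (1 - \<beta>) * (cw * a * (mG / \<sigma> x))" using b0
            by (intro mult_left_mono) auto
          hence "(1 - \<beta>) * \<delta> \<le> (1 - \<beta>) * cw * (a * (mG / \<sigma> x))"
            by (simp only: mult.assoc)
          moreover have "ennreal ((1 - \<beta>) * cw * (a * (mG / \<sigma> x))) = ennreal ((1 - \<beta>) * cw) * (ennreal a * ennreal (mG / \<sigma> x))"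
          proof -
            have p1: "0 \<le> (1 - \<beta>) * cw" using b0 cw0 by simp
            have p2: "0 \<le> mG / \<sigma> x" using mG0 sp by simp
            have p3: "0 \<le> a * (mG / \<sigma> x)" by (rule mult_nonneg_nonneg) (use a p2 in auto)
            show ?thesis using ennreal_mult[OF p1 p3] ennreal_mult[of a "mG / \<sigma> x"] a p2 by simp
          qed
          ultimately show ?thesis by (metis ennreal_leI)
        qed
        also have "\<dots> = ennreal ((1 - \<beta>) * cw) * (ennreal a * (\<integral>\<^sup>+e. indicator G (x + \<mu> x + \<sigma> x * e) \<partial>lborel))"
          using affine_indicator[OF G_sets sp, of "x + \<mu> x"] mG_eq mG0 sp by (simp add: divide_ennreal)
        also have "\<dots> = ennreal ((1 - \<beta>) * cw) * (ennreal a * (\<integral>\<^sup>+e. indicator G (x + \<mu> x + \<sigma> x * e) * indicator {-E0..E0} e \<partial>lborel))"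
        proof -
          have "(\<integral>\<^sup>+e. indicator G (x + \<mu> x + \<sigma> x * e) \<partial>lborel)
              = (\<integral>\<^sup>+e. (indicator G (x + \<mu> x + \<sigma> x * e) :: ennreal) * indicator {-E0..E0} e \<partial>lborel)"
            by (intro nn_integral_cong) (auto simp: indicator_def dest: ebound)
          thus ?thesis by simp
        qed
        also have "\<dots> \<le> ennreal ((1 - \<beta>) * cw) * (\<integral>\<^sup>+e. indicator G (x + \<mu> x + \<sigma> x * e) \<partial>D)"
        proof (intro mult_left_mono)
          have fm: "(\<lambda>e. indicator G (x + \<mu> x + \<sigma> x * e) :: ennreal) \<in> borel_measurable borel" by measurable
          show "ennreal a * (\<integral>\<^sup>+e. indicator G (x + \<mu> x + \<sigma> x * e) * indicator {-E0..E0} e \<partial>lborel)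
              \<le> (\<integral>\<^sup>+e. indicator G (x + \<mu> x + \<sigma> x * e) \<partial>D)" using bspec[OF a(2) fm] by simp
        qed simp
        also have "\<dots> = (\<integral>\<^sup>+e. ennreal ((1 - \<beta>) * cw) * indicator G (x + \<mu> x + \<sigma> x * e) \<partial>D)"
          by (intro nn_integral_cmult[symmetric] Dm) measurable
        also have "\<dots> \<le> B" unfolding B_def by (intro nn_integral_mono ptw)
        finally show ?thesis .
      qed
      have c0: "0 \<le> (1 - \<beta>) * \<delta>" using b0 d0 by simp
      have A_le: "A \<le> ennreal (T - (1 - \<beta>) * \<delta>)" by (rule enn_sub[OF Btot LB c0 T0])
      define u where "u = \<theta> * Mm + U + \<theta> / 2"
      have U0: "0 \<le> U" using th0 Sg E1_nonneg Q_nonneg by (simp add: U_def)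
      have u0: "0 \<le> u" using th0 Mm0 U0 by (simp add: u_def)
      have uK: "u \<le> \<theta> * K" using U by (simp add: u_def K_def algebra_simps)
      have u1: "u \<le> 1" using uK thK1 s1 by linarith
      have eu: "exp u \<le> 1 + 2 * u"
      proof -
        have "u\<^sup>2 \<le> u" using u0 u1 by (simp add: power2_eq_square mult_left_le_one_le)
        thus ?thesis using exp_bound[OF u0 u1] by linarith
      qed
      have Teq: "T = exp (\<theta> * \<bar>x\<bar>) * exp (-(\<theta>/2)) * exp u"
        by (simp add: T_def u_def exp_add[symmetric] algebra_simps)
      have ex3: "exp (\<theta> * \<bar>x\<bar>) \<le> 3"
      proof -
        have "\<theta> * \<bar>x\<bar> \<le> \<theta> * R" using th0 mid by (intro mult_left_mono) auto
        hence "exp (\<theta> * \<bar>x\<bar>) \<le> exp 1" using thR by simp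
        thus ?thesis using exp_le by linarith
      qed
      have "T - exp (-(\<theta>/2)) * exp (\<theta> * \<bar>x\<bar>) \<le> exp (\<theta> * \<bar>x\<bar>) * exp (-(\<theta>/2)) * (2 * u)"
      proof -
        have "exp (\<theta> * \<bar>x\<bar>) * exp (-(\<theta>/2)) * exp u \<le> exp (\<theta> * \<bar>x\<bar>) * exp (-(\<theta>/2)) * (1 + 2 * u)"
          using eu by (intro mult_left_mono) auto
        thus ?thesis using Teq by (simp add: algebra_simps)
      qed
      also have "\<dots> \<le> 3 * 1 * (2 * u)"
        using ex3 u0 th0 by (intro mult_mono) auto
      also have "\<dots> \<le> 6 * (\<theta> * K)" using uK by simp
      also have "\<dots> \<le> 6 * (s * (\<eta> * \<delta>' / 24))" using thK by linarith
      also have "\<dots> = (s * \<eta> / 4) * \<delta>'" by simp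
      also have "\<dots> \<le> (1 - \<beta>) * \<delta>" using b1 b0 d' s0 eta by (intro mult_mono) auto
      finally have "T - (1 - \<beta>) * \<delta> \<le> exp (-(\<theta>/2)) * h x" using mid by (simp add: h_nG)
      thus ?thesis using A_le unfolding A_def by (meson ennreal_leI order_trans)
    qed
  qed
  show ?thesis
    apply (rule exI[of _ s], intro conjI s0)
    apply (rule exI[of _ "\<theta>/2"], intro conjI)
    using th0 apply simp
    apply (rule exI[of _ h], intro conjI h_meas)
    using b0 h_ge apply blast
    using main by simp
qed

end



primrec Xd :: "(real \<Rightarrow> real) \<Rightarrow> (real \<Rightarrow> real) \<Rightarrow> real \<Rightarrow> (nat \<Rightarrow> real) \<Rightarrow> nat \<Rightarrow> real" where
  "Xd \<mu> \<sigma> x0 f 0 = x0"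
| "Xd \<mu> \<sigma> x0 f (Suc t) = Xd \<mu> \<sigma> x0 f t + \<mu> (Xd \<mu> \<sigma> x0 f t) + \<sigma> (Xd \<mu> \<sigma> x0 f t) * f (Suc t)"

primrec Ld :: "(real \<Rightarrow> real) \<Rightarrow> (real \<Rightarrow> real) \<Rightarrow> real \<Rightarrow> (nat \<Rightarrow> real) \<Rightarrow> nat \<Rightarrow> real" where
  "Ld \<mu> \<sigma> x0 f 0 = 0"
| "Ld \<mu> \<sigma> x0 f (Suc t) = Ld \<mu> \<sigma> x0 f t + indicator {y. 0 < \<mu> y} (Xd \<mu> \<sigma> x0 f t) *
      (\<mu> (Xd \<mu> \<sigma> x0 f t) + \<sigma> (Xd \<mu> \<sigma> x0 f t) * f (Suc t))"

lemma X_eq: "Xproc \<mu> \<sigma> \<epsilon> x0 t \<omega> = Xd \<mu> \<sigma> x0 (\<lambda>i. \<epsilon> i \<omega>) t"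
  by (induction t) auto

lemma W_eq: "wealth \<mu> \<sigma> \<epsilon> x0 (pi_plus \<mu> \<sigma> \<epsilon> x0) v0 t \<omega> = v0 * exp (Ld \<mu> \<sigma> x0 (\<lambda>i. \<epsilon> i \<omega>) t)"
proof (induction t)
  case 0 then show ?case by simp
next
  case (Suc t)
  let ?X = "Xd \<mu> \<sigma> x0 (\<lambda>i. \<epsilon> i \<omega>) t"
  let ?I = "indicator {y. 0 < \<mu> y} ?X :: real"
  have ratio: "Sproc \<mu> \<sigma> \<epsilon> x0 (Suc t) \<omega> / Sproc \<mu> \<sigma> \<epsilon> x0 t \<omega> = exp (\<mu> ?X + \<sigma> ?X * \<epsilon> (Suc t) \<omega>)"
    by (simp add: Sproc_def X_eq exp_add)
  have pi: "pi_plus \<mu> \<sigma> \<epsilon> x0 (Suc t) \<omega> = ?I" by (simp add: pi_plus_def X_eq)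
  have fac: "(1 - ?I) + ?I * exp (\<mu> ?X + \<sigma> ?X * \<epsilon> (Suc t) \<omega>) = exp (?I * (\<mu> ?X + \<sigma> ?X * \<epsilon> (Suc t) \<omega>))"
    by (simp add: indicator_def)
  have e1: "?I * Sproc \<mu> \<sigma> \<epsilon> x0 (Suc t) \<omega> / Sproc \<mu> \<sigma> \<epsilon> x0 t \<omega>
      = ?I * (Sproc \<mu> \<sigma> \<epsilon> x0 (Suc t) \<omega> / Sproc \<mu> \<sigma> \<epsilon> x0 t \<omega>)" by simp
  have "wealth \<mu> \<sigma> \<epsilon> x0 (pi_plus \<mu> \<sigma> \<epsilon> x0) v0 (Suc t) \<omega>
      = wealth \<mu> \<sigma> \<epsilon> x0 (pi_plus \<mu> \<sigma> \<epsilon> x0) v0 t \<omega> * ((1 - ?I) + ?I * exp (\<mu> ?X + \<sigma> ?X * \<epsilon> (Suc t) \<omega>))"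
    by (simp only: wealth.simps pi e1 ratio)
  also have "\<dots> = v0 * exp (Ld \<mu> \<sigma> x0 (\<lambda>i. \<epsilon> i \<omega>) t) * exp (?I * (\<mu> ?X + \<sigma> ?X * \<epsilon> (Suc t) \<omega>))"
    by (simp only: Suc.IH fac)
  also have "\<dots> = v0 * exp (Ld \<mu> \<sigma> x0 (\<lambda>i. \<epsilon> i \<omega>) (Suc t))"
    by (simp add: exp_add)
  finally show ?case .
qed

lemma XL_cong:
  assumes "\<And>i. 1 \<le> i \<Longrightarrow> i \<le> t \<Longrightarrow> f i = g i"
  shows "Xd \<mu> \<sigma> x0 f t = Xd \<mu> \<sigma> x0 g t \<and> Ld \<mu> \<sigma> x0 f t = Ld \<mu> \<sigma> x0 g t"
  using assms by (induction t) auto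

lemma XL_meas:
  assumes [measurable]: "\<mu> \<in> borel_measurable borel" "\<sigma> \<in> borel_measurable borel"
  shows "k \<le> t \<Longrightarrow> (\<lambda>f. Xd \<mu> \<sigma> x0 f k) \<in> borel_measurable (PiM {1..t} (\<lambda>_. borel)) \<and>
                  (\<lambda>f. Ld \<mu> \<sigma> x0 f k) \<in> borel_measurable (PiM {1..t} (\<lambda>_. borel))"
proof (induction k)
  case 0 then show ?case by simp
next
  case (Suc k)
  hence IH[measurable]: "(\<lambda>f. Xd \<mu> \<sigma> x0 f k) \<in> borel_measurable (PiM {1..t} (\<lambda>_. borel))"
    "(\<lambda>f. Ld \<mu> \<sigma> x0 f k) \<in> borel_measurable (PiM {1..t} (\<lambda>_. borel))" by auto
  have [measurable]: "(\<lambda>f. f (Suc k)) \<in> borel_measurable (PiM {1..t} (\<lambda>_. borel))"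
    using Suc.prems by (intro measurable_component_singleton) auto
  show ?case by (simp only: Xd.simps Ld.simps) (intro conjI; measurable)
qed

lemma exp_split: fixes s L I Y H :: real shows "exp (-s * (L + I * Y)) * H = exp (-s * L) * (exp (-s * I * Y) * H)"
proof -
  have eq: "-s * (L + I * Y) = -s * L + (-s * I * Y)" by (simp add: algebra_simps)
  show ?thesis unfolding eq exp_add[of "-s * L" "-s * I * Y"] by (rule mult.assoc)
qed

lemma iterate:
  fixes M :: "'a measure" and \<epsilon> :: "nat \<Rightarrow> 'a \<Rightarrow> real" and D :: "real measure"
  assumes P: "prob_space M"
    and em: "\<And>t. t \<ge> 1 \<Longrightarrow> \<epsilon> t \<in> borel_measurable M"
    and ind: "prob_space.indep_vars M (\<lambda>_. borel) \<epsilon> {1..}"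
    and ident: "\<And>t. t \<ge> 1 \<Longrightarrow> distr M borel (\<epsilon> t) = D"
    and mum[measurable]: "\<mu> \<in> borel_measurable borel" and sgm[measurable]: "\<sigma> \<in> borel_measurable borel"
    and hm[measurable]: "h \<in> borel_measurable borel"
    and h0: "\<And>x. 0 \<le> h x" and c0: "0 \<le> c"
    and step: "\<And>x. (\<integral>\<^sup>+e. ennreal (exp (-s * indicator {y. 0 < \<mu> y} x * (\<mu> x + \<sigma> x * e)) * h (x + \<mu> x + \<sigma> x * e)) \<partial>D)
                 \<le> ennreal (c * h x)"
  shows "(\<integral>\<^sup>+\<omega>. ennreal (exp (-s * Ld \<mu> \<sigma> x0 (\<lambda>i. \<epsilon> i \<omega>) t) * h (Xd \<mu> \<sigma> x0 (\<lambda>i. \<epsilon> i \<omega>) t)) \<partial>M)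
     \<le> ennreal (c ^ t * h x0)"
proof (induction t)
  case 0
  interpret Pr: prob_space M by (rule P)
  show ?case by (simp add: Pr.emeasure_space_1)
next
  case (Suc t)
  interpret Pr: prob_space M by (rule P)
  let ?S = "PiM {1..t} (\<lambda>_. borel) :: (nat \<Rightarrow> real) measure"
  define Pp where "Pp = (\<lambda>\<omega>. restrict (\<lambda>i. \<epsilon> i \<omega>) {1..t})"
  define E where "E = \<epsilon> (Suc t)"
  have XLm[measurable]: "(\<lambda>f. Xd \<mu> \<sigma> x0 f t) \<in> borel_measurable ?S" "(\<lambda>f. Ld \<mu> \<sigma> x0 f t) \<in> borel_measurable ?S"
    using XL_meas[OF mum sgm, of t t x0] by auto
  have iv0: "Pr.indep_var ?S Pp (PiM {Suc t} (\<lambda>_. borel)) (\<lambda>\<omega>. restrict (\<lambda>i. \<epsilon> i \<omega>) {Suc t})"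
    unfolding Pp_def by (rule Pr.indep_var_restrict[OF ind]) auto
  let ?T = "PiM {Suc t} (\<lambda>_. borel) :: (nat \<Rightarrow> real) measure"
  define E where "E = (\<lambda>\<omega>. restrict (\<lambda>i. \<epsilon> i \<omega>) {Suc t})"
  have iv: "Pr.indep_var ?S Pp ?T E" using iv0 by (simp add: E_def)
  have Pm[measurable]: "Pp \<in> measurable M ?S" and Em[measurable]: "E \<in> measurable M ?T"
    using Pr.indep_var_rv1[OF iv] Pr.indep_var_rv2[OF iv] by auto
  have e1m[measurable]: "\<epsilon> (Suc t) \<in> borel_measurable M" using em by simp
  have cm[measurable]: "(\<lambda>q. q (Suc t)) \<in> borel_measurable ?T" by (rule measurable_component_singleton) simp
  have deq: "distr M ?S Pp \<Otimes>\<^sub>M distr M ?T E = distr M (?S \<Otimes>\<^sub>M ?T) (\<lambda>x. (Pp x, E x))"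
    using iv Pr.indep_var_distribution_eq by blast
  have DE: "distr M borel (\<epsilon> (Suc t)) = D" by (rule ident) simp
  interpret PE: prob_space "distr M ?T E" by (rule Pr.prob_space_distr) simp
  define G where "G = (\<lambda>p. exp (-s * Ld \<mu> \<sigma> x0 p t) * h (Xd \<mu> \<sigma> x0 p t))"
  define W where "W = (\<lambda>x e. exp (-s * indicator {y. 0 < \<mu> y} x * (\<mu> x + \<sigma> x * e)) * h (x + \<mu> x + \<sigma> x * e))"
  define F where "F = (\<lambda>pe::(nat \<Rightarrow> real) \<times> (nat \<Rightarrow> real). ennreal (exp (-s * Ld \<mu> \<sigma> x0 (fst pe) t) * W (Xd \<mu> \<sigma> x0 (fst pe) t) (snd pe (Suc t))))"
  have Gm[measurable]: "G \<in> borel_measurable ?S" unfolding G_def by measurable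
  have Fm[measurable]: "F \<in> borel_measurable (?S \<Otimes>\<^sub>M ?T)" unfolding F_def W_def by measurable
  have Wm: "(\<lambda>e. ennreal (W x e)) \<in> borel_measurable (distr M borel (\<epsilon> (Suc t)))" for x
  proof -
    have "(\<lambda>e. ennreal (W x e)) \<in> borel_measurable borel" unfolding W_def by measurable
    thus ?thesis using measurable_cong_sets[of "distr M borel (\<epsilon> (Suc t))" borel borel borel] by simp
  qed
  have agree: "Xd \<mu> \<sigma> x0 (Pp \<omega>) t = Xd \<mu> \<sigma> x0 (\<lambda>i. \<epsilon> i \<omega>) t \<and> Ld \<mu> \<sigma> x0 (Pp \<omega>) t = Ld \<mu> \<sigma> x0 (\<lambda>i. \<epsilon> i \<omega>) t" for \<omega>
    by (rule XL_cong) (auto simp: Pp_def)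
  have Z_eq: "ennreal (exp (-s * Ld \<mu> \<sigma> x0 (\<lambda>i. \<epsilon> i \<omega>) (Suc t)) * h (Xd \<mu> \<sigma> x0 (\<lambda>i. \<epsilon> i \<omega>) (Suc t)))
      = F (Pp \<omega>, E \<omega>)" for \<omega>
  proof -
    have "F (Pp \<omega>, E \<omega>) = ennreal (exp (-s * Ld \<mu> \<sigma> x0 (\<lambda>i. \<epsilon> i \<omega>) t) * W (Xd \<mu> \<sigma> x0 (\<lambda>i. \<epsilon> i \<omega>) t) (\<epsilon> (Suc t) \<omega>))"
      using agree[of \<omega>] by (simp add: F_def E_def)
    also have "\<dots> = ennreal (exp (-s * Ld \<mu> \<sigma> x0 (\<lambda>i. \<epsilon> i \<omega>) (Suc t)) * h (Xd \<mu> \<sigma> x0 (\<lambda>i. \<epsilon> i \<omega>) (Suc t)))"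
      by (simp only: W_def Xd.simps Ld.simps exp_split)
    finally show ?thesis by simp
  qed
  have Zt_eq: "ennreal (exp (-s * Ld \<mu> \<sigma> x0 (\<lambda>i. \<epsilon> i \<omega>) t) * h (Xd \<mu> \<sigma> x0 (\<lambda>i. \<epsilon> i \<omega>) t)) = ennreal (G (Pp \<omega>))" for \<omega>
    using agree[of \<omega>] by (simp add: G_def)
  have "(\<integral>\<^sup>+\<omega>. ennreal (exp (-s * Ld \<mu> \<sigma> x0 (\<lambda>i. \<epsilon> i \<omega>) (Suc t)) * h (Xd \<mu> \<sigma> x0 (\<lambda>i. \<epsilon> i \<omega>) (Suc t))) \<partial>M)
      = (\<integral>\<^sup>+\<omega>. F (Pp \<omega>, E \<omega>) \<partial>M)" by (intro nn_integral_cong Z_eq)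
  also have "\<dots> = (\<integral>\<^sup>+pe. F pe \<partial>distr M (?S \<Otimes>\<^sub>M ?T) (\<lambda>x. (Pp x, E x)))"
  proof (rule nn_integral_distr[symmetric])
    show "(\<lambda>x. (Pp x, E x)) \<in> measurable M (?S \<Otimes>\<^sub>M ?T)" using Pm Em by (rule measurable_Pair)
    show "F \<in> borel_measurable (distr M (?S \<Otimes>\<^sub>M ?T) (\<lambda>x. (Pp x, E x)))" using Fm by simp
  qed
  also have "\<dots> = (\<integral>\<^sup>+pe. F pe \<partial>(distr M ?S Pp \<Otimes>\<^sub>M distr M ?T E))" by (simp only: deq)
  also have "\<dots> = (\<integral>\<^sup>+p. \<integral>\<^sup>+e. F (p, e) \<partial>distr M ?T E \<partial>distr M ?S Pp)"
  proof (rule PE.nn_integral_fst[symmetric])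
    show "F \<in> borel_measurable (distr M ?S Pp \<Otimes>\<^sub>M distr M ?T E)"
      by (subst measurable_cong_sets[OF sets_pair_measure_cong[OF sets_distr sets_distr] refl]) (rule Fm)
  qed
  also have "\<dots> \<le> (\<integral>\<^sup>+p. ennreal (c * G p) \<partial>distr M ?S Pp)"
  proof (rule nn_integral_mono)
    fix p
    have Fp: "(\<lambda>q. F (p, q)) \<in> borel_measurable ?T" unfolding F_def W_def fst_conv snd_conv by measurable
    have "(\<integral>\<^sup>+q. F (p, q) \<partial>distr M ?T E) = (\<integral>\<^sup>+\<omega>. F (p, E \<omega>) \<partial>M)"
      by (rule nn_integral_distr[OF Em]) (simp add: Fp)
    also have "\<dots> = (\<integral>\<^sup>+\<omega>. ennreal (exp (-s * Ld \<mu> \<sigma> x0 p t) * W (Xd \<mu> \<sigma> x0 p t) (\<epsilon> (Suc t) \<omega>)) \<partial>M)"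
      by (simp add: F_def E_def)
    also have "\<dots> = (\<integral>\<^sup>+e. ennreal (exp (-s * Ld \<mu> \<sigma> x0 p t) * W (Xd \<mu> \<sigma> x0 p t) e) \<partial>distr M borel (\<epsilon> (Suc t)))"
      by (rule nn_integral_distr[symmetric]) (auto simp: W_def)
    also have "\<dots> = (\<integral>\<^sup>+e. ennreal (exp (-s * Ld \<mu> \<sigma> x0 p t)) * ennreal (W (Xd \<mu> \<sigma> x0 p t) e) \<partial>distr M borel (\<epsilon> (Suc t)))"
      by (intro nn_integral_cong) (simp add: W_def ennreal_mult h0)
    also have "\<dots> = ennreal (exp (-s * Ld \<mu> \<sigma> x0 p t)) * (\<integral>\<^sup>+e. ennreal (W (Xd \<mu> \<sigma> x0 p t) e) \<partial>distr M borel (\<epsilon> (Suc t)))"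
      by (rule nn_integral_cmult[OF Wm])
    also have "\<dots> \<le> ennreal (exp (-s * Ld \<mu> \<sigma> x0 p t)) * ennreal (c * h (Xd \<mu> \<sigma> x0 p t))"
      using step unfolding DE W_def by (intro mult_left_mono) auto
    also have "\<dots> = ennreal (c * G p)"
      using c0 h0 by (simp add: G_def ennreal_mult[symmetric] algebra_simps)
    finally show "(\<integral>\<^sup>+e. F (p, e) \<partial>distr M ?T E) \<le> ennreal (c * G p)" .
  qed
  also have "\<dots> = (\<integral>\<^sup>+\<omega>. ennreal (c * G (Pp \<omega>)) \<partial>M)"
  proof (rule nn_integral_distr[OF Pm])
    have "(\<lambda>p. ennreal (c * G p)) \<in> borel_measurable ?S" by measurable
    thus "(\<lambda>p. ennreal (c * G p)) \<in> borel_measurable (distr M ?S Pp)" by simp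
  qed
  also have "\<dots> = (\<integral>\<^sup>+\<omega>. ennreal c * ennreal (G (Pp \<omega>)) \<partial>M)"
    using c0 by (intro nn_integral_cong) (simp add: ennreal_mult G_def h0)
  also have "\<dots> = ennreal c * (\<integral>\<^sup>+\<omega>. ennreal (G (Pp \<omega>)) \<partial>M)"
  proof (rule nn_integral_cmult)
    show "(\<lambda>\<omega>. ennreal (G (Pp \<omega>))) \<in> borel_measurable M" by measurable
  qed
  also have "\<dots> = ennreal c * (\<integral>\<^sup>+\<omega>. ennreal (exp (-s * Ld \<mu> \<sigma> x0 (\<lambda>i. \<epsilon> i \<omega>) t) * h (Xd \<mu> \<sigma> x0 (\<lambda>i. \<epsilon> i \<omega>) t)) \<partial>M)"
    by (intro nn_integral_cong arg_cong2[where f="(*)"] refl Zt_eq[symmetric])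
  also have "\<dots> \<le> ennreal c * ennreal (c ^ t * h x0)" by (intro mult_left_mono Suc.IH) auto
  also have "\<dots> = ennreal (c ^ Suc t * h x0)" using c0 h0 by (simp add: ennreal_mult[symmetric])
  finally show ?case .
qed




lemma XL_measM:
  assumes em: "\<And>t. t \<ge> 1 \<Longrightarrow> \<epsilon> t \<in> borel_measurable M"
    and [measurable]: "\<mu> \<in> borel_measurable borel" "\<sigma> \<in> borel_measurable borel"
  shows "(\<lambda>\<omega>. Xd \<mu> \<sigma> x0 (\<lambda>i. \<epsilon> i \<omega>) k) \<in> borel_measurable M \<and>
         (\<lambda>\<omega>. Ld \<mu> \<sigma> x0 (\<lambda>i. \<epsilon> i \<omega>) k) \<in> borel_measurable M"
proof (induction k)
  case 0 then show ?case by simp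
next
  case (Suc k)
  hence [measurable]: "(\<lambda>\<omega>. Xd \<mu> \<sigma> x0 (\<lambda>i. \<epsilon> i \<omega>) k) \<in> borel_measurable M"
    "(\<lambda>\<omega>. Ld \<mu> \<sigma> x0 (\<lambda>i. \<epsilon> i \<omega>) k) \<in> borel_measurable M" by auto
  have [measurable]: "\<epsilon> (Suc k) \<in> borel_measurable M" using em by simp
  show ?case by (simp only: Xd.simps Ld.simps) (intro conjI; measurable)
qed

lemma setup_step2:
  fixes M :: "'a measure" and \<epsilon> :: "nat \<Rightarrow> 'a \<Rightarrow> real"
    and \<mu> \<sigma> \<gamma> :: "real \<Rightarrow> real"
  assumes prob: "prob_space M"
    and eps_meas: "\<And>t. t \<ge> 1 \<Longrightarrow> \<epsilon> t \<in> borel_measurable M"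
    and A1_density: "distributed M lborel (\<epsilon> 1) (\<lambda>x. ennreal (\<gamma> x))"
    and A1_gamma_bounds: "\<And>K. compact K \<Longrightarrow> \<exists>a b. 0 < a \<and> (\<forall>x\<in>K. a \<le> \<gamma> x \<and> \<gamma> x \<le> b)"
    and mu_meas: "\<mu> \<in> borel_measurable borel"
    and sigma_meas: "\<sigma> \<in> borel_measurable borel"
    and A2_mu_locbdd: "\<And>K. compact K \<Longrightarrow> bounded (\<mu> ` K)"
    and A2_sigma_pos: "\<And>x. \<sigma> x > 0"
    and A2_sigma_away: "\<And>K. compact K \<Longrightarrow> \<exists>a>0. \<forall>x\<in>K. a \<le> \<sigma> x"
    and A2_sigma_bdd: "\<exists>C. \<forall>x. \<sigma> x \<le> C"
    and A3: "Limsup at_infinity (\<lambda>x::real. ereal (\<bar>x + \<mu> x\<bar> / \<bar>x\<bar>)) < 1"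
    and A4_exp: "\<exists>\<kappa>>0. integrable M (\<lambda>\<omega>. exp (\<kappa> * (\<epsilon> 1 \<omega>)\<^sup>2))"
    and A4_mean: "prob_space.expectation M (\<epsilon> 1) = 0"
    and RCplus: "emeasure lborel {x. \<mu> x > 0} > 0"
  shows "step2 (distr M borel (\<epsilon> 1)) \<mu> \<sigma>"
proof -
  have em1[measurable]: "\<epsilon> 1 \<in> borel_measurable M" using eps_meas by simp
  obtain \<kappa> where k: "\<kappa> > 0" "integrable M (\<lambda>\<omega>. exp (\<kappa> * (\<epsilon> 1 \<omega>)\<^sup>2))" using A4_exp by blast
  interpret Pr: prob_space M by (rule prob)
  have intQ: "integrable M (\<lambda>\<omega>. (\<epsilon> 1 \<omega>)\<^sup>2 * exp (2 * \<bar>\<epsilon> 1 \<omega>\<bar>))"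
  proof (rule Bochner_Integration.integrable_bound)
    show "integrable M (\<lambda>\<omega>. (2/\<kappa>) * exp (2/\<kappa>) * exp (\<kappa> * (\<epsilon> 1 \<omega>)\<^sup>2))"
      using k(2) by (rule Bochner_Integration.integrable_mult_right)
    show "(\<lambda>\<omega>. (\<epsilon> 1 \<omega>)\<^sup>2 * exp (2 * \<bar>\<epsilon> 1 \<omega>\<bar>)) \<in> borel_measurable M" by measurable
    show "AE \<omega> in M. norm ((\<epsilon> 1 \<omega>)\<^sup>2 * exp (2 * \<bar>\<epsilon> 1 \<omega>\<bar>)) \<le> norm ((2/\<kappa>) * exp (2/\<kappa>) * exp (\<kappa> * (\<epsilon> 1 \<omega>)\<^sup>2))"
      using sq_exp_bound[OF k(1)] k(1) by (intro AE_I2) simp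
  qed
  have int1: "integrable M (\<epsilon> 1)"
  proof (rule Bochner_Integration.integrable_bound)
    show "integrable M (\<lambda>\<omega>. (\<epsilon> 1 \<omega>)\<^sup>2 * exp (2 * \<bar>\<epsilon> 1 \<omega>\<bar>) + 1)"
      using intQ by (intro Bochner_Integration.integrable_add) auto
    show "\<epsilon> 1 \<in> borel_measurable M" by measurable
    show "AE \<omega> in M. norm (\<epsilon> 1 \<omega>) \<le> norm ((\<epsilon> 1 \<omega>)\<^sup>2 * exp (2 * \<bar>\<epsilon> 1 \<omega>\<bar>) + 1)"
    proof (intro AE_I2)
      fix \<omega>
      let ?e = "\<epsilon> 1 \<omega>"
      have "\<bar>?e\<bar> \<le> ?e\<^sup>2 * exp (2 * \<bar>?e\<bar>) + 1"
      proof (cases "\<bar>?e\<bar> \<le> 1")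
        case True thus ?thesis by (simp add: add_increasing)
      next
        case False
        hence "\<bar>?e\<bar> * 1 \<le> \<bar>?e\<bar> * \<bar>?e\<bar>" by (intro mult_left_mono) auto
        hence "\<bar>?e\<bar> \<le> \<bar>?e\<bar> * \<bar>?e\<bar>" by simp
        also have "\<dots> = ?e\<^sup>2 * 1" by (simp add: power2_eq_square abs_mult_self_eq)
        also have "\<dots> \<le> ?e\<^sup>2 * exp (2 * \<bar>?e\<bar>)" by (intro mult_left_mono) auto
        finally show ?thesis by simp
      qed
      thus "norm ?e \<le> norm (?e\<^sup>2 * exp (2 * \<bar>?e\<bar>) + 1)" by simp
    qed
  qed
  have Dl: "distr M borel (\<epsilon> 1) = density lborel (\<lambda>x. ennreal (\<gamma> x))"
  proof -
    have "distr M borel (\<epsilon> 1) = distr M lborel (\<epsilon> 1)" by (rule distr_cong) auto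
    thus ?thesis using distributed_distr_eq_density[OF A1_density] by simp
  qed
  have gm[measurable]: "(\<lambda>x. ennreal (\<gamma> x)) \<in> borel_measurable borel"
    using distributed_borel_measurable[OF A1_density] by simp
  show ?thesis
  proof (intro step2.intro step_setup.intro step2_axioms.intro)
    show "prob_space (distr M borel (\<epsilon> 1))" using Pr.prob_space_distr[OF em1] by simp
    show "sets (distr M borel (\<epsilon> 1)) = sets borel" by simp
    show "integrable (distr M borel (\<epsilon> 1)) (\<lambda>e. e)"
      using int1 em1 by (subst integrable_distr_eq) auto
    show "integral\<^sup>L (distr M borel (\<epsilon> 1)) (\<lambda>e. e) = 0"
      using A4_mean em1 by (subst integral_distr) auto
    show "integrable (distr M borel (\<epsilon> 1)) (\<lambda>e. e\<^sup>2 * exp (2 * \<bar>e\<bar>))"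
      using intQ em1 by (subst integrable_distr_eq) auto
    show "\<mu> \<in> borel_measurable borel" "\<sigma> \<in> borel_measurable borel" by fact+
    show "\<exists>M. \<forall>x. \<bar>x\<bar> \<le> R \<longrightarrow> \<bar>\<mu> x\<bar> \<le> M" for R
    proof -
      have "bounded (\<mu> ` {-R..R})" by (intro A2_mu_locbdd compact_Icc)
      then obtain a where "\<forall>y\<in>\<mu> ` {-R..R}. norm y \<le> a" by (auto simp: bounded_iff)
      thus ?thesis by (intro exI[of _ a]) (auto simp: abs_le_iff)
    qed
    show "\<And>x. \<sigma> x > 0" by fact
    show "\<exists>a>0. \<forall>x. \<bar>x\<bar> \<le> R \<longrightarrow> a \<le> \<sigma> x" for R
    proof -
      obtain a where "a > 0" "\<forall>x\<in>{-R..R}. a \<le> \<sigma> x" using A2_sigma_away[OF compact_Icc] by blast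
      thus ?thesis by (intro exI[of _ a]) (auto simp: abs_le_iff)
    qed
    show "\<exists>C. \<forall>x. \<sigma> x \<le> C" by fact
    show "\<exists>r<1. \<exists>R0. \<forall>x. R0 \<le> \<bar>x\<bar> \<longrightarrow> \<bar>x + \<mu> x\<bar> \<le> r * \<bar>x\<bar>"
    proof -
      obtain r where r: "Limsup at_infinity (\<lambda>x::real. ereal (\<bar>x + \<mu> x\<bar> / \<bar>x\<bar>)) < ereal r" "ereal r < 1"
        using ereal_dense2[OF A3] by blast
      have "eventually (\<lambda>x::real. ereal (\<bar>x + \<mu> x\<bar> / \<bar>x\<bar>) < ereal r) at_infinity"
        by (rule Limsup_lessD[OF r(1)])
      then obtain b where b: "\<forall>x::real. b \<le> norm x \<longrightarrow> ereal (\<bar>x + \<mu> x\<bar> / \<bar>x\<bar>) < ereal r"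
        by (auto simp: eventually_at_infinity)
      have "\<forall>x. max b 1 \<le> \<bar>x\<bar> \<longrightarrow> \<bar>x + \<mu> x\<bar> \<le> r * \<bar>x\<bar>"
      proof safe
        fix x :: real assume x: "max b 1 \<le> \<bar>x\<bar>"
        hence "\<bar>x + \<mu> x\<bar> / \<bar>x\<bar> < r" using b by auto
        moreover have "0 < \<bar>x\<bar>" using x by auto
        ultimately show "\<bar>x + \<mu> x\<bar> \<le> r * \<bar>x\<bar>" by (simp add: divide_less_eq)
      qed
      moreover have "r < 1" using r(2) by simp
      ultimately show ?thesis by blast
    qed
    show "\<exists>a>0. \<forall>f\<in>borel_measurable borel.
          ennreal a * (\<integral>\<^sup>+e. f e * indicator {-E0..E0} e \<partial>lborel) \<le> (\<integral>\<^sup>+e. f e \<partial>distr M borel (\<epsilon> 1))" for E0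
    proof -
      obtain a b where ab: "0 < a" "\<forall>x\<in>{-E0..E0}. a \<le> \<gamma> x \<and> \<gamma> x \<le> b"
        using A1_gamma_bounds[OF compact_Icc] by blast
      show ?thesis
      proof (intro exI[of _ a] conjI ab(1) ballI)
        fix f :: "real \<Rightarrow> ennreal" assume fm[measurable]: "f \<in> borel_measurable borel"
        have "ennreal a * (\<integral>\<^sup>+e. f e * indicator {-E0..E0} e \<partial>lborel)
            = (\<integral>\<^sup>+e. ennreal a * (f e * indicator {-E0..E0} e) \<partial>lborel)"
          by (rule nn_integral_cmult[symmetric]) measurable
        also have "\<dots> \<le> (\<integral>\<^sup>+e. ennreal (\<gamma> e) * f e \<partial>lborel)"
        proof (rule nn_integral_mono)
          fix e
          show "ennreal a * (f e * indicator {-E0..E0} e) \<le> ennreal (\<gamma> e) * f e"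
          proof (cases "e \<in> {-E0..E0}")
            case True
            hence "ennreal a \<le> ennreal (\<gamma> e)" using ab by (intro ennreal_leI) auto
            thus ?thesis using True by (simp add: mult_right_mono)
          qed simp
        qed
        also have "\<dots> = (\<integral>\<^sup>+e. f e \<partial>distr M borel (\<epsilon> 1))"
          unfolding Dl by (rule nn_integral_density[symmetric]) measurable
        finally show "ennreal a * (\<integral>\<^sup>+e. f e * indicator {-E0..E0} e \<partial>lborel) \<le> (\<integral>\<^sup>+e. f e \<partial>distr M borel (\<epsilon> 1))" .
      qed
    qed
    show "emeasure lborel {x. 0 < \<mu> x} > 0" using RCplus by simp
  qed
qed




theorem theoremt2p15:
  fixes M :: "'a measure" and \<epsilon> :: "nat \<Rightarrow> 'a \<Rightarrow> real"
    and \<mu> \<sigma> \<gamma> :: "real \<Rightarrow> real" and x0 v0 :: real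
  assumes prob: "prob_space M"
    and eps_meas: "\<And>t. t \<ge> 1 \<Longrightarrow> \<epsilon> t \<in> borel_measurable M"
    and eps_indep: "prob_space.indep_vars M (\<lambda>_. borel) \<epsilon> {1..}"
    and eps_ident: "\<And>t. t \<ge> 1 \<Longrightarrow> distr M borel (\<epsilon> t) = distr M borel (\<epsilon> 1)"
    (* (A1) *)
    and A1_density: "distributed M lborel (\<epsilon> 1) (\<lambda>x. ennreal (\<gamma> x))"
    and A1_gamma_meas: "\<gamma> \<in> borel_measurable borel"
    and A1_gamma_nonneg: "\<And>x. \<gamma> x \<ge> 0"
    and A1_gamma_bounds: "\<And>K. compact K \<Longrightarrow> \<exists>a b. 0 < a \<and> (\<forall>x\<in>K. a \<le> \<gamma> x \<and> \<gamma> x \<le> b)"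
    (* (A2) *)
    and mu_meas: "\<mu> \<in> borel_measurable borel"
    and sigma_meas: "\<sigma> \<in> borel_measurable borel"
    and A2_mu_locbdd: "\<And>K. compact K \<Longrightarrow> bounded (\<mu> ` K)"
    and A2_sigma_pos: "\<And>x. \<sigma> x > 0"
    and A2_sigma_away: "\<And>K. compact K \<Longrightarrow> \<exists>a>0. \<forall>x\<in>K. a \<le> \<sigma> x"
    and A2_sigma_bdd: "\<exists>C. \<forall>x. \<sigma> x \<le> C"
    (* (A3) *)
    and A3: "Limsup at_infinity (\<lambda>x::real. ereal (\<bar>x + \<mu> x\<bar> / \<bar>x\<bar>)) < 1"
    (* (A4) *)
    and A4_exp: "\<exists>\<kappa>>0. integrable M (\<lambda>\<omega>. exp (\<kappa> * (\<epsilon> 1 \<omega>)\<^sup>2))"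
    and A4_mean: "prob_space.expectation M (\<epsilon> 1) = 0"
    (* (RC+) *)
    and RCplus: "emeasure lborel {x. \<mu> x > 0} > 0"
    and v0_pos: "v0 > 0"
  shows "\<exists>b>0. \<exists>c>0. \<exists>T::nat. \<forall>t\<ge>T.
           measure M {\<omega> \<in> space M. wealth \<mu> \<sigma> \<epsilon> x0 (pi_plus \<mu> \<sigma> \<epsilon> x0) v0 t \<omega> \<ge> exp (b * real t)}
             \<ge> 1 - exp (- c * real t)"
proof -
  interpret Pr: prob_space M by (rule prob)
  have S2: "step2 (distr M borel (\<epsilon> 1)) \<mu> \<sigma>"
    by (rule setup_step2[where M=M and \<epsilon>=\<epsilon> and \<gamma>=\<gamma> and \<mu>=\<mu> and \<sigma>=\<sigma>, OF prob eps_meas A1_density A1_gamma_bounds mu_meas sigma_meas A2_mu_locbdd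
          A2_sigma_pos A2_sigma_away A2_sigma_bdd A3 A4_exp A4_mean RCplus])
  interpret S: step2 "distr M borel (\<epsilon> 1)" \<mu> \<sigma> by (rule S2)
  obtain s z h where s0: "s > 0" and z0: "z > 0" and hmeas[measurable]: "h \<in> borel_measurable borel"
    and hmx: "\<exists>hm>0. \<forall>x. hm \<le> h x"
    and step: "\<forall>x. (\<integral>\<^sup>+e. ennreal (exp (-s * S.Ii x * (\<mu> x + \<sigma> x * e)) * h (x + \<mu> x + \<sigma> x * e)) \<partial>distr M borel (\<epsilon> 1))
            \<le> ennreal (exp (-z) * h x)"
    using S.drift by blast
  obtain hm where hm0: "hm > 0" and hm: "\<And>x. hm \<le> h x" using hmx by blast
  have h0: "0 \<le> h x" for x using hm[of x] hm0 by linarith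
  have step': "(\<integral>\<^sup>+e. ennreal (exp (-s * indicator {y. 0 < \<mu> y} x * (\<mu> x + \<sigma> x * e)) * h (x + \<mu> x + \<sigma> x * e)) \<partial>distr M borel (\<epsilon> 1))
            \<le> ennreal (exp (-z) * h x)" for x
    using spec[OF step, of x] unfolding S.Ii_def .
  have it: "(\<integral>\<^sup>+\<omega>. ennreal (exp (-s * Ld \<mu> \<sigma> x0 (\<lambda>i. \<epsilon> i \<omega>) t) * h (Xd \<mu> \<sigma> x0 (\<lambda>i. \<epsilon> i \<omega>) t)) \<partial>M)
     \<le> ennreal (exp (-z) ^ t * h x0)" for t
    by (rule iterate[OF prob eps_meas eps_indep eps_ident mu_meas sigma_meas hmeas h0 _ step']) auto
  define b where "b = z / (2 * s)"
  define c where "c = z / 4"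
  define K0 where "K0 = h x0 / (hm * exp (s * ln v0))"
  have K0: "0 < K0" using hm[of x0] hm0 by (simp add: K0_def)
  have hx0: "h x0 = K0 * (hm * exp (s * ln v0))" using hm0 by (simp add: K0_def)
  define T where "T = nat \<lceil>4 * \<bar>ln K0\<bar> / z\<rceil>"
  have sb: "s * b = z / 2" using s0 by (simp add: b_def)
  have bpos: "0 < b" using s0 z0 by (simp add: b_def)
  have cpos: "0 < c" using z0 by (simp add: c_def)
  have main: "\<forall>t\<ge>T. measure M {\<omega> \<in> space M. wealth \<mu> \<sigma> \<epsilon> x0 (pi_plus \<mu> \<sigma> \<epsilon> x0) v0 t \<omega> \<ge> exp (b * real t)}
             \<ge> 1 - exp (- c * real t)"
  proof (intro allI impI)
    fix t assume tT: "T \<le> t"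
    define L where "L = (\<lambda>\<omega>. Ld \<mu> \<sigma> x0 (\<lambda>i. \<epsilon> i \<omega>) t)"
    define X where "X = (\<lambda>\<omega>. Xd \<mu> \<sigma> x0 (\<lambda>i. \<epsilon> i \<omega>) t)"
    have Lm[measurable]: "L \<in> borel_measurable M" and Xm[measurable]: "X \<in> borel_measurable M"
      using XL_measM[of \<epsilon> M \<mu> \<sigma> x0 t, OF eps_meas mu_meas sigma_meas] by (auto simp: L_def X_def)
    define Bad where "Bad = {\<omega> \<in> space M. v0 * exp (L \<omega>) < exp (b * real t)}"
    have Bad_sets: "Bad \<in> sets M" unfolding Bad_def by measurable
    have Good: "{\<omega> \<in> space M. wealth \<mu> \<sigma> \<epsilon> x0 (pi_plus \<mu> \<sigma> \<epsilon> x0) v0 t \<omega> \<ge> exp (b * real t)} = space M - Bad"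
      by (auto simp: Bad_def W_eq L_def not_less)
    define kt where "kt = hm * exp (s * ln v0) * exp (- (s * b * real t))"
    have kt0: "0 < kt" using hm0 by (simp add: kt_def)
    have pw: "ennreal kt * indicator Bad \<omega> \<le> ennreal (exp (-s * L \<omega>) * h (X \<omega>))" for \<omega>
    proof (cases "\<omega> \<in> Bad")
      case True
      hence lt: "v0 * exp (L \<omega>) < exp (b * real t)" by (simp add: Bad_def)
      have "ln (v0 * exp (L \<omega>)) < ln (exp (b * real t))" using lt v0_pos by (intro ln_less_cancel_iff[THEN iffD2]) auto
      hence "ln v0 + L \<omega> < b * real t" using v0_pos by (simp add: ln_mult)
      hence "s * (ln v0 + L \<omega>) \<le> s * (b * real t)" using s0 by (intro mult_left_mono) auto
      hence "s * ln v0 + - (s * b * real t) \<le> -s * L \<omega>" by (simp add: algebra_simps)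
      hence e: "exp (s * ln v0) * exp (- (s * b * real t)) \<le> exp (-s * L \<omega>)" by (simp add: exp_add[symmetric])
      have "kt = (exp (s * ln v0) * exp (- (s * b * real t))) * hm" by (simp add: kt_def)
      also have "\<dots> \<le> exp (-s * L \<omega>) * h (X \<omega>)" using e hm hm0 by (intro mult_mono) auto
      finally show ?thesis using True by (simp add: ennreal_leI)
    qed simp
    have "ennreal kt * emeasure M Bad = (\<integral>\<^sup>+\<omega>. ennreal kt * indicator Bad \<omega> \<partial>M)"
      using Bad_sets by (simp add: nn_integral_cmult_indicator)
    also have "\<dots> \<le> (\<integral>\<^sup>+\<omega>. ennreal (exp (-s * L \<omega>) * h (X \<omega>)) \<partial>M)" by (intro nn_integral_mono pw)
    also have "\<dots> \<le> ennreal (exp (-z) ^ t * h x0)" using it[of t] by (simp add: L_def X_def)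
    finally have "ennreal (kt * measure M Bad) \<le> ennreal (exp (-z) ^ t * h x0)"
      using kt0 by (simp add: Pr.emeasure_eq_measure ennreal_mult)
    hence kB: "kt * measure M Bad \<le> exp (-z) ^ t * h x0" using h0 by (simp add: ennreal_le_iff)
    have lnK: "ln K0 \<le> z * real t / 4"
    proof -
      have "4 * \<bar>ln K0\<bar> / z \<le> real T" unfolding T_def by linarith
      also have "\<dots> \<le> real t" using tT by simp
      finally have "4 * \<bar>ln K0\<bar> \<le> z * real t" using z0 by (simp add: divide_le_eq mult.commute)
      thus ?thesis by linarith
    qed
    have K0e: "K0 \<le> exp (z * real t / 4)"
    proof -
      have "K0 = exp (ln K0)" using K0 by simp
      also have "\<dots> \<le> exp (z * real t / 4)" using lnK by simp
      finally show ?thesis .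
    qed
    have "exp (-z) ^ t * h x0 = exp (- (z * real t)) * K0 * (hm * exp (s * ln v0))"
      using exp_of_nat_mult[of t "-z"] by (simp add: hx0 mult.commute)
    also have "\<dots> \<le> exp (- (z * real t)) * exp (z * real t / 4) * (hm * exp (s * ln v0))"
      using K0e hm0 by (intro mult_right_mono mult_left_mono) auto
    also have "\<dots> = exp (- c * real t) * kt"
    proof -
      have "exp (- (z * real t)) * exp (z * real t / 4) = exp (- c * real t) * exp (- (s * b * real t))"
        unfolding exp_add[symmetric] using sb by (simp add: c_def algebra_simps)
      thus ?thesis by (simp add: kt_def algebra_simps)
    qed
    finally have "kt * measure M Bad \<le> kt * exp (- c * real t)" using kB by (simp add: mult.commute)
    hence PB: "measure M Bad \<le> exp (- c * real t)" using kt0 by simp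
    have "measure M (space M - Bad) = 1 - measure M Bad" using Pr.prob_compl[OF Bad_sets] .
    thus "1 - exp (- c * real t) \<le> measure M {\<omega> \<in> space M. exp (b * real t) \<le> wealth \<mu> \<sigma> \<epsilon> x0 (pi_plus \<mu> \<sigma> \<epsilon> x0) v0 t \<omega>}"
      using PB Good by simp
  qed
  show ?thesis using bpos cpos main by blast
qed


end
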